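(* Let $r$ be a positive integer and $n$ a nonnegative integer. Then \begin{multline*} {_{2r+6}\omega_{2r+5}} (ab;c,ab/c,bq,bq^2,\dots,bq^r,aq^n,aq^{n+1},\dots,aq^{n+r-1},q^{-rn};q^r,p) \\ =\frac{(a/c,c/b;q,p)_n\,(q^r,abq^r;q^r,p)_n} {(cq^r,abq^r/c;q^r,p)_n\,(a,1/b;q,p)_n}. \end{multline*}
   Context: Let $p$ be a complex number with $|p|<1$, $q$ a nonzero complex number, and all parameters generic so that no denominator vanishes. For nonzero $x$, $E(x)=E(x;p)=\prod_{k\ge 0}(1-xp^k)(1-p^{k+1}/x)$. For a nonzero base $Q$ and integer $m$, $(a;Q,p)_m=\prod_{k=0}^{m-1}E(aQ^k)$ if $m>0$, $=1$ if $m=0$, and $=1/\prod_{k=0}^{-m-1}E(aQ^{m+k})$ if $m<0$; $(a_1,\dots,a_s;Q,p)_m=\prod_{i=1}^s(a_i;Q,p)_m$. For parameters with $(a_4\cdots a_{r+1})^2=a_1^{r-3}Q^{r-5}$ and one of $a_4,\dots,a_{r+1}$ of the form $Q^{-N}$ ($N$ a nonnegative integer), \[{_{r+1}\omega_r}(a_1;a_4,\dots,a_{r+1};Q,p)=\sum_{k\ge 0}\frac{E(a_1Q^{2k})}{E(a_1)}\frac{(a_1,a_4,\dots,a_{r+1};Q,p)_k\,Q^k}{(Q,a_1Q/a_4,\dots,a_1Q/a_{r+1};Q,p)_k}\] (a terminating sum). *)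

theory Defs
  imports "HOL-Analysis.Analysis"
begin

definition ellE :: "complex \<Rightarrow> complex \<Rightarrow> complex" where
  "ellE x p = (\<Prod>k. (1 - x * p ^ k) * (1 - p ^ (k + 1) / x))"

definition efac :: "complex \<Rightarrow> complex \<Rightarrow> complex \<Rightarrow> int \<Rightarrow> complex" where
  "efac a Q p m =
     (if m > 0 then (\<Prod>k<nat m. ellE (a * Q ^ k) p)
      else if m = 0 then 1
      else 1 / (\<Prod>k<nat (- m). ellE (a * Q powi (m + int k)) p))"

text \<open>The (terminating) very-well-poised elliptic series
  _{r+1}omega_r(a1; a4,...,a_{r+1}; Q, p), parameters a4..a_{r+1} given as a list.\<close>
definition omega :: "complex \<Rightarrow> complex list \<Rightarrow> complex \<Rightarrow> complex \<Rightarrow> complex" where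
  "omega a1 as Q p =
     (\<Sum>k. ellE (a1 * Q ^ (2 * k)) p / ellE a1 p *
        (efac a1 Q p (int k) * (\<Prod>a\<leftarrow>as. efac a Q p (int k)) * Q ^ k) /
        (efac Q Q p (int k) * (\<Prod>a\<leftarrow>as. efac (a1 * Q / a) Q p (int k))))"

end

theory Submission
  imports Defs "HOL-Complex_Analysis.Complex_Analysis"
begin

definition Pinf :: "complex \<Rightarrow> complex \<Rightarrow> complex" where
  "Pinf p c = (\<Prod>k. 1 - c * p ^ k)"

lemma summable_geom_c:
  fixes p c :: complex assumes "norm p < 1"
  shows "summable (\<lambda>k. norm (c * p ^ k))"
  using assms by (simp add: norm_mult norm_power summable_mult)

lemma Pinf_conv:
  fixes p c :: complex assumes "norm p < 1"
  shows "convergent_prod (\<lambda>k. 1 - c * p ^ k)"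
proof -
  have "summable (\<lambda>k. norm ((1 - c * p ^ k) - 1))"
    using summable_geom_c[OF assms, of c] by simp
  thus ?thesis
    by (intro abs_convergent_prod_imp_convergent_prod summable_imp_abs_convergent_prod)
qed

lemma Pinf_has_prod:
  fixes p c :: complex assumes "norm p < 1"
  shows "(\<lambda>k. 1 - c * p ^ k) has_prod Pinf p c"
  unfolding Pinf_def using Pinf_conv[OF assms] by (rule convergent_prod_has_prod)

lemma Pinf_head:
  fixes p c :: complex assumes "norm p < 1"
  shows "Pinf p c = (1 - c) * Pinf p (c * p)"
proof -
  have "(\<lambda>k. 1 - c * p ^ Suc k) has_prod Pinf p (c * p)"
    using Pinf_has_prod[OF assms, of "c * p"] by (simp add: mult.assoc mult.commute mult.left_commute)
  hence "(\<lambda>k. 1 - c * p ^ k) has_prod (Pinf p (c * p) * (1 - c * p ^ 0))"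
    by (rule has_prod_Suc_imp)
  thus ?thesis using Pinf_has_prod[OF assms, of c] has_prod_unique2 by (simp add: mult.commute)
qed

lemma ellE_Pinf:
  fixes p x :: complex assumes "norm p < 1"
  shows "ellE x p = Pinf p x * Pinf p (p / x)"
proof -
  have "(\<lambda>k. (1 - x * p ^ k) * (1 - (p / x) * p ^ k)) has_prod (Pinf p x * Pinf p (p / x))"
    by (intro has_prod_mult Pinf_has_prod assms)
  moreover have "(\<lambda>k. (1 - x * p ^ k) * (1 - (p / x) * p ^ k)) = (\<lambda>k. (1 - x * p ^ k) * (1 - p ^ (k + 1) / x))"
    by (intro ext) (simp add: power_Suc times_divide_eq_left mult.commute)
  ultimately show ?thesis unfolding ellE_def by (metis has_prod_unique)
qed

lemma Pinf_eq_0_iff: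
  fixes p c :: complex assumes "norm p < 1"
  shows "Pinf p c = 0 \<longleftrightarrow> (\<exists>k. c * p ^ k = 1)"
proof -
  have "Pinf p c = 0 \<longleftrightarrow> 0 \<in> range (\<lambda>k. 1 - c * p ^ k)"
    by (rule has_prod_eq_0_iff[OF Pinf_has_prod[OF assms, of c]])
  also have "\<dots> \<longleftrightarrow> (\<exists>k. c * p ^ k = 1)"
    by (auto simp: image_iff)
  finally show ?thesis .
qed

lemma Pinf_0 [simp]: "Pinf p 0 = 1"
  by (simp add: Pinf_def)

lemma ellE_one:
  fixes p :: complex assumes "norm p < 1"
  shows "ellE 1 p = 0"
proof -
  have "Pinf p 1 = 0" using Pinf_eq_0_iff[OF assms, of 1] by (metis mult_1 power_0)
  thus ?thesis by (simp add: ellE_Pinf[OF assms])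
qed

lemma ellE_inv:
  fixes p x :: complex assumes "norm p < 1" "x \<noteq> 0"
  shows "ellE (1 / x) p = - ellE x p / x"
proof -
  have "ellE (1/x) p = Pinf p (1/x) * Pinf p (p * x)"
    using ellE_Pinf[OF assms(1)] by simp
  also have "Pinf p (1/x) = (1 - 1/x) * Pinf p (p / x)"
    using Pinf_head[OF assms(1), of "1/x"] by (simp add: mult.commute)
  finally have 1: "ellE (1/x) p = (1 - 1/x) * Pinf p (p / x) * Pinf p (p * x)" .
  have 2: "ellE x p = (1 - x) * Pinf p (x * p) * Pinf p (p / x)"
    using ellE_Pinf[OF assms(1)] Pinf_head[OF assms(1), of x] by simp
  have "(1 - 1/x) = - (1 - x) / x" using assms(2) by (simp add: field_simps)
  thus ?thesis unfolding 1 2 using assms(2) by (simp add: field_simps mult.commute mult.left_commute)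
qed

lemma ellE_shift:
  fixes p x :: complex assumes "norm p < 1" "x \<noteq> 0" "p \<noteq> 0"
  shows "ellE (p * x) p = - ellE x p / x"
proof -
  have "ellE (p * x) p = Pinf p (p * x) * Pinf p (1 / x)"
    using ellE_Pinf[OF assms(1)] assms by simp
  also have "\<dots> = ellE (1 / x) p"
    using ellE_Pinf[OF assms(1), of "1/x"] by (simp add: mult.commute)
  finally show ?thesis using ellE_inv[OF assms(1,2)] by simp
qed

lemma ellE_eq_0_iff:
  fixes p x :: complex assumes "norm p < 1" "x \<noteq> 0"
  shows "ellE x p = 0 \<longleftrightarrow> (\<exists>k. x * p ^ k = 1) \<or> (\<exists>k. x = p ^ Suc k)"
  using assms by (auto simp: ellE_Pinf Pinf_eq_0_iff field_simps)

lemma ellE_p0: "ellE x 0 = 1 - x"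
proof -
  have "ellE x 0 = Pinf 0 x * Pinf 0 0" using ellE_Pinf[of 0 x] by simp
  moreover have "Pinf 0 x = (1 - x) * Pinf 0 0" using Pinf_head[of 0 x] by simp
  ultimately show ?thesis by simp
qed

lemma Pinf_partial_lim:
  fixes p c :: complex assumes "norm p < 1"
  shows "(\<lambda>N. \<Prod>k<N. 1 - c * p ^ k) \<longlonglongrightarrow> Pinf p c"
proof -
  have "(\<lambda>N. \<Prod>k\<le>N. 1 - c * p ^ k) \<longlonglongrightarrow> Pinf p c"
    unfolding Pinf_def by (rule convergent_prod_LIMSEQ[OF Pinf_conv[OF assms]])
  hence "(\<lambda>N. \<Prod>k<Suc N. 1 - c * p ^ k) \<longlonglongrightarrow> Pinf p c"
    by (simp add: lessThan_Suc_atMost)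
  thus ?thesis by (rule LIMSEQ_imp_Suc)
qed

lemma Pinf_holo_ball:
  fixes p z :: complex assumes p: "norm p < 1"
  shows "Pinf p holomorphic_on ball z 1"
proof -
  define A where "A = cball z 1"
  define R where "R = norm z + 1"
  have nA: "norm c \<le> R" if "c \<in> A" for c
    using that norm_triangle_sub[of c z] unfolding A_def R_def
    by (auto simp: dist_norm norm_minus_commute)
  have uc: "uniformly_convergent_on A (\<lambda>N c. \<Prod>n<N. 1 + (- c * p ^ n))"
  proof (rule uniformly_convergent_on_prod)
    show "continuous_on A (\<lambda>c. - c * p ^ n)" for n by (intro continuous_intros)
    show "compact A" unfolding A_def by simp
    show "uniformly_convergent_on A (\<lambda>N c. \<Sum>n<N. norm (- c * p ^ n))"
    proof (rule Weierstrass_m_test'[where M = "\<lambda>n. R * norm p ^ n"])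
      fix n c assume "c \<in> A"
      thus "norm (norm (- c * p ^ n)) \<le> R * norm p ^ n"
        using nA by (simp add: norm_mult norm_power mult_right_mono)
    next
      show "summable (\<lambda>n. R * norm p ^ n)" using p by (simp add: summable_mult)
    qed
  qed
  hence ul: "uniform_limit A (\<lambda>N c. \<Prod>n<N. 1 + (- c * p ^ n)) (\<lambda>c. lim (\<lambda>N. \<Prod>n<N. 1 + (- c * p ^ n))) sequentially"
    by (simp add: uniformly_convergent_uniform_limit_iff)
  have "lim (\<lambda>N. \<Prod>n<N. 1 + (- c * p ^ n)) = Pinf p c" for c
    using Pinf_partial_lim[OF p, of c] by (simp add: limI)
  hence ul2: "uniform_limit (cball z 1) (\<lambda>N c. \<Prod>n<N. 1 - c * p ^ n) (Pinf p) sequentially"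
    using ul unfolding A_def by simp
  show ?thesis
  proof (rule holomorphic_uniform_limit[OF _ ul2])
    show "\<forall>\<^sub>F n in sequentially. continuous_on (cball z 1) (\<lambda>c. \<Prod>n<n. 1 - c * p ^ n) \<and>
        (\<lambda>c. \<Prod>n<n. 1 - c * p ^ n) holomorphic_on ball z 1"
      by (intro always_eventually allI conjI continuous_intros holomorphic_intros)
  qed auto
qed

lemma Pinf_analytic:
  fixes p :: complex assumes p: "norm p < 1"
  shows "Pinf p analytic_on UNIV"
  unfolding analytic_on_def using Pinf_holo_ball[OF p] by (meson zero_less_one)

lemma Pinf_holo:
  fixes p :: complex assumes p: "norm p < 1"
  shows "Pinf p holomorphic_on UNIV"
  using Pinf_analytic[OF p] analytic_imp_holomorphic by blast

lemma per_powi: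
  fixes G :: "complex \<Rightarrow> 'a" and p :: complex
  assumes per: "\<And>w. w \<noteq> 0 \<Longrightarrow> G (p * w) = G w" and p: "p \<noteq> 0" and w: "w \<noteq> 0"
  shows "G (p powi m * w) = G w"
proof (induction m rule: int_induct[where k = 0])
  case base then show ?case by simp
next
  case (step1 i)
  have "p powi (i + 1) * w = p * (p powi i * w)"
    using p by (simp add: power_int_add_1')
  then show ?case using per[of "p powi i * w"] p w step1 by (simp add: mult.assoc)
next
  case (step2 i)
  have e: "p powi i * w = p * (p powi (i - 1) * w)"
    using p power_int_add_1'[of p "i - 1"] by (simp add: mult.assoc)
  have nz: "p powi (i - 1) * w \<noteq> 0" using p w by simp
  have "G (p * (p powi (i - 1) * w)) = G (p powi (i - 1) * w)"
    by (rule per[OF nz])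
  hence "G (p powi i * w) = G (p powi (i - 1) * w)" by (simp only: e)
  then show ?case using step2 by simp
qed

lemma exists_powi_annulus:
  fixes p x :: complex
  assumes p: "norm p < 1" "p \<noteq> 0" and x: "x \<noteq> 0"
  shows "\<exists>m::int. norm p \<le> norm (p powi m * x) \<and> norm (p powi m * x) \<le> 1"
proof -
  define \<rho> where "\<rho> = norm p"
  have r0: "0 < \<rho>" "\<rho> < 1" using p by (auto simp: \<rho>_def)
  define L where "L = - ln \<rho>"
  have L0: "L > 0" using r0 by (simp add: L_def)
  define m where "m = \<lceil>ln (norm x) / L\<rceil>"
  have m1: "ln (norm x) / L \<le> m" and m2: "m - 1 < ln (norm x) / L"
    unfolding m_def by linarith+
  have nrm: "norm (p powi k * x) = exp (ln (norm x) - k * L)" for k :: int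
  proof -
    have "norm (p powi k * x) = \<rho> powi k * norm x"
      by (simp add: norm_mult norm_power_int \<rho>_def)
    also have "\<rho> powi k = exp (k * ln \<rho>)"
      using r0 by (simp add: powr_real_of_int'[symmetric] powr_def)
    also have "norm x = exp (ln (norm x))" using x by simp
    finally show ?thesis by (simp add: L_def exp_add[symmetric] algebra_simps)
  qed
  have "ln (norm x) - m * L \<le> 0" using m1 L0 by (simp add: field_simps)
  hence a: "norm (p powi m * x) \<le> 1" by (simp add: nrm)
  have "ln (norm x) - (m - 1) * L > 0" using m2 L0 by (simp add: field_simps)
  hence "ln (norm x) - m * L > - L" by (simp add: algebra_simps)
  hence "exp (ln (norm x) - m * L) > exp (- L)" by simp
  moreover have "exp (- L) = \<rho>" using r0 by (simp add: L_def)
  ultimately have b: "norm p \<le> norm (p powi m * x)" by (simp add: nrm \<rho>_def)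
  from a b show ?thesis by blast
qed

lemma tendsto_scale_at:
  fixes c x :: complex assumes c: "c \<noteq> 0"
  shows "filterlim (\<lambda>w. w / c) (at x) (at (c * x))"
proof -
  have "((\<lambda>w. w / c) \<longlongrightarrow> (c * x) / c) (at (c * x))"
    using c by (intro tendsto_intros) auto
  hence "((\<lambda>w. w / c) \<longlongrightarrow> x) (at (c * x))" using c by simp
  moreover have "eventually (\<lambda>w. w / c \<noteq> x) (at (c * x))"
  proof -
    have "\<forall>w. w \<noteq> c * x \<longrightarrow> w / c \<noteq> x" using c by auto
    thus ?thesis unfolding eventually_at_filter by (simp add: always_eventually)
  qed
  ultimately show ?thesis by (simp add: filterlim_at)
qed

lemma periodic_liouville:
  fixes G :: "complex \<Rightarrow> complex" and p :: complex
  assumes p: "norm p < 1" "p \<noteq> 0"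
    and per: "\<And>w. w \<noteq> 0 \<Longrightarrow> G (p * w) = G w"
    and loc: "\<And>x0. x0 \<noteq> 0 \<Longrightarrow> \<exists>g. g analytic_on {x0} \<and> eventually (\<lambda>w. G w = g w) (at x0)"
  shows "\<exists>c. \<forall>x. x \<noteq> 0 \<longrightarrow> remove_sings G x = c"
proof -
  define H where "H = remove_sings G"
  have lim: "G \<midarrow>x\<rightarrow> H x" and ana: "H analytic_on {x}" if x0: "x \<noteq> 0" for x
  proof -
    obtain g where g: "g analytic_on {x}" "eventually (\<lambda>w. G w = g w) (at x)"
      using loc[OF x0] by blast
    have "g \<midarrow>x\<rightarrow> g x" using g(1) analytic_at_imp_isCont isCont_def by blast
    moreover have "eventually (\<lambda>w. g w = G w) (at x)" using g(2) by (auto elim: eventually_mono)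
    ultimately have gl: "G \<midarrow>x\<rightarrow> g x" by (rule Lim_transform_eventually)
    thus "G \<midarrow>x\<rightarrow> H x" unfolding H_def using remove_sings_eqI by auto
    have "isolated_singularity_at G x"
      using isolated_singularity_at_cong[OF g(2) refl] isolated_singularity_at_analytic[OF g(1)] by simp
    thus "H analytic_on {x}" unfolding H_def using remove_sings_analytic_at gl by blast
  qed
  have anaS: "H analytic_on (- {0})"
    using ana analytic_on_analytic_at by blast
  hence holS: "H holomorphic_on (- {0})" by (rule analytic_imp_holomorphic)
  have perH: "H (p powi m * x) = H x" if "x \<noteq> 0" for x m
  proof -
    define c where "c = p powi m"
    have c0: "c \<noteq> 0" using p by (simp add: c_def)
    have "(\<lambda>w. G (w / c)) \<midarrow>c * x\<rightarrow> H x"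
      by (rule filterlim_compose[OF lim[OF that] tendsto_scale_at[OF c0]])
    moreover have "eventually (\<lambda>w. G (w / c) = G w) (at (c * x))"
    proof -
      have "eventually (\<lambda>w. w \<noteq> 0) (at (c * x))"
        using that c0 by (intro eventually_neq_at_within)
      thus ?thesis
      proof eventually_elim
        case (elim w)
        have nz: "w / c \<noteq> 0" using elim c0 by simp
        have "G (c * (w / c)) = G (w / c)" unfolding c_def
          by (rule per_powi[where G = G and p = p, OF per p(2) nz[unfolded c_def]])
        thus ?case using c0 by simp
      qed
    qed
    ultimately have "G \<midarrow>c * x\<rightarrow> H x" by (rule Lim_transform_eventually)
    thus ?thesis unfolding H_def c_def using remove_sings_eqI by blast
  qed
  define K where "K = cball (0::complex) 1 - ball 0 (norm p)"
  have K: "compact K" unfolding K_def by (intro compact_diff) auto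
  have K0: "K \<subseteq> - {0}" using p unfolding K_def by auto
  have "continuous_on K H"
    using holomorphic_on_imp_continuous_on[OF holomorphic_on_subset[OF holS K0]] .
  hence "bounded (H ` K)" using K compact_continuous_image compact_imp_bounded by blast
  then obtain B where B: "\<And>x. x \<in> K \<Longrightarrow> norm (H x) \<le> B" by (auto simp: bounded_iff)
  have Bd: "norm (H x) \<le> B" if x0: "x \<noteq> 0" for x
  proof -
    obtain m where m: "norm p \<le> norm (p powi m * x)" "norm (p powi m * x) \<le> 1"
      using exists_powi_annulus[OF p x0] by blast
    hence "p powi m * x \<in> K" unfolding K_def by auto
    thus ?thesis using B perH[OF x0] by metis
  qed
  have hol: "(H \<circ> exp) holomorphic_on UNIV"
    by (rule holomorphic_on_compose_gen[where t = "- {0}"]) (auto intro: holomorphic_intros holS)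
  have "bounded (range (H \<circ> exp))"
    unfolding bounded_iff using Bd exp_not_eq_zero by (metis comp_apply rangeE)
  then obtain c where c: "\<And>z. (H \<circ> exp) z = c"
    using Liouville_theorem[OF hol] unfolding constant_on_def by blast
  have "H x = c" if "x \<noteq> 0" for x
    using c[of "Ln x"] that by simp
  thus ?thesis unfolding H_def by blast
qed

definition Rf :: "complex \<Rightarrow> complex \<Rightarrow> complex" where
  "Rf p z = Pinf p (p * z) * Pinf p (p / z)"

definition hh :: "complex \<Rightarrow> complex \<Rightarrow> complex \<Rightarrow> complex" where
  "hh p y x = ellE (x * y) p * ellE (x / y) p"

lemma ellE_Rf:
  assumes p: "norm p < 1"
  shows "ellE z p = (1 - z) * Rf p z"
  using ellE_Pinf[OF p, of z] Pinf_head[OF p, of z] by (simp add: Rf_def mult.commute mult.left_commute)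

lemma Rf_one_nz:
  assumes p: "norm p < 1"
  shows "Rf p 1 \<noteq> 0"
proof -
  have "p * p ^ k \<noteq> 1" for k
  proof
    assume "p * p ^ k = 1"
    hence "norm (p ^ Suc k) = 1" by simp
    moreover have "norm p ^ Suc k \<le> norm p"
      using p by (intro power_Suc_le_self) auto
    hence "norm (p ^ Suc k) < 1"
      using p by (simp add: norm_power del: power_Suc)
    ultimately show False by simp
  qed
  hence "Pinf p p \<noteq> 0" using Pinf_eq_0_iff[OF p, of p] by auto
  thus ?thesis by (simp add: Rf_def)
qed

lemma Pinf_comp_analytic:
  assumes p: "norm p < 1" and f: "f analytic_on S"
  shows "(\<lambda>x. Pinf p (f x)) analytic_on S"
proof -
  have "(Pinf p \<circ> f) analytic_on S"
    by (rule analytic_on_compose[OF f]) (rule analytic_on_subset[OF Pinf_analytic[OF p]], simp)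
  thus ?thesis by (simp add: o_def)
qed

lemma ellE_comp_analytic:
  assumes p: "norm p < 1" and f: "f analytic_on S" and nz: "\<And>x. x \<in> S \<Longrightarrow> f x \<noteq> 0"
  shows "(\<lambda>x. ellE (f x) p) analytic_on S"
proof -
  have "(\<lambda>x. ellE (f x) p) = (\<lambda>x. Pinf p (f x) * Pinf p (p / f x))"
    using ellE_Pinf[OF p] by auto
  moreover have "(\<lambda>x. Pinf p (f x) * Pinf p (p / f x)) analytic_on S"
    using nz by (intro analytic_on_mult Pinf_comp_analytic[OF p] analytic_intros f) auto
  ultimately show ?thesis by simp
qed

lemma Rf_comp_analytic:
  assumes p: "norm p < 1" and f: "f analytic_on S" and nz: "\<And>x. x \<in> S \<Longrightarrow> f x \<noteq> 0"
  shows "(\<lambda>x. Rf p (f x)) analytic_on S"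
  unfolding Rf_def using nz by (intro analytic_on_mult Pinf_comp_analytic[OF p] analytic_intros f) auto

lemma ellE_zero_powi:
  assumes p: "norm p < 1" and z: "z \<noteq> 0" and E: "ellE z p = 0"
  shows "\<exists>m::int. z = p powi m"
proof -
  from ellE_eq_0_iff[OF p z] E consider k where "z * p ^ k = 1" | k where "z = p ^ Suc k" by blast
  then show ?thesis
  proof cases
    case 1
    have "p ^ k \<noteq> 0"
    proof
      assume "p ^ k = 0"
      hence "z * p ^ k = 0" by simp
      with 1 show False by simp
    qed
    hence "z = p powi (- int k)" using 1 by (simp add: power_int_minus field_simps)
    thus ?thesis by blast
  next
    case 2
    hence "z = p powi (int (Suc k))" by (simp only: power_int_of_nat)
    thus ?thesis by blast
  qed
qed

lemma ellE_inv':
  assumes p: "norm p < 1" and "x \<noteq> 0" "y \<noteq> 0"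
  shows "ellE (x / y) p = - (x / y) * ellE (y / x) p"
proof -
  have h: "ellE (1 / (y / x)) p = - ellE (y / x) p / (y / x)"
    by (rule ellE_inv[OF p]) (use assms in simp)
  have "1 / (y / x) = x / y" by simp
  with h show ?thesis using assms by (simp add: field_simps)
qed

lemma hh_shift:
  assumes p: "norm p < 1" "p \<noteq> 0" and "x \<noteq> 0" "y \<noteq> 0"
  shows "hh p y (p * x) = hh p y x / x ^ 2"
proof -
  have a: "ellE (p * (x * y)) p = - ellE (x * y) p / (x * y)"
    by (rule ellE_shift[OF p(1) _ p(2)]) (use assms in simp)
  have b: "ellE (p * (x / y)) p = - ellE (x / y) p / (x / y)"
    by (rule ellE_shift[OF p(1) _ p(2)]) (use assms in simp)
  have "hh p y (p * x) = ellE (p * (x * y)) p * ellE (p * (x / y)) p"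
    unfolding hh_def by (simp add: mult.assoc)
  also have "\<dots> = (- ellE (x * y) p / (x * y)) * (- ellE (x / y) p / (x / y))"
    unfolding a b ..
  also have "\<dots> = hh p y x / x ^ 2"
    unfolding hh_def using assms by (simp add: field_simps power2_eq_square)
  finally show ?thesis .
qed

lemma hh_inv:
  assumes p: "norm p < 1" and "x \<noteq> 0" "y \<noteq> 0"
  shows "hh p y (1 / x) = hh p y x / x ^ 2"
proof -
  have a: "ellE (1 / (x / y)) p = - ellE (x / y) p / (x / y)"
    by (rule ellE_inv[OF p]) (use assms in simp)
  have b: "ellE (1 / (x * y)) p = - ellE (x * y) p / (x * y)"
    by (rule ellE_inv[OF p]) (use assms in simp)
  have "hh p y (1 / x) = ellE (1 / (x / y)) p * ellE (1 / (x * y)) p"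
    unfolding hh_def by simp
  also have "\<dots> = (- ellE (x / y) p / (x / y)) * (- ellE (x * y) p / (x * y))"
    unfolding a b ..
  also have "\<dots> = hh p y x / x ^ 2"
    unfolding hh_def using assms by (simp add: field_simps power2_eq_square)
  finally show ?thesis .
qed

lemma hh_swap:
  assumes p: "norm p < 1" and "u \<noteq> 0" "v \<noteq> 0"
  shows "hh p u v = - (v / u) * hh p v u"
  unfolding hh_def using ellE_inv'[OF p assms(3,2)] by (simp add: mult.commute mult.left_commute)

lemma hh_self:
  assumes p: "norm p < 1" and "v \<noteq> 0"
  shows "hh p v v = 0"
  unfolding hh_def using assms ellE_one[OF p] by simp

lemma hh_analytic:
  assumes p: "norm p < 1" and y: "y \<noteq> 0"
  shows "hh p y analytic_on (- {0})"
  unfolding hh_def[abs_def] using y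
  by (intro analytic_on_mult ellE_comp_analytic[OF p] analytic_intros) auto

lemma local_removable:
  assumes N: "N holomorphic_on S" "open S" "x1 \<in> S" "N x1 = 0"
    and K: "K analytic_on {x1}" "K x1 \<noteq> 0"
    and fac: "\<And>w. w \<noteq> x1 \<Longrightarrow> hf w = (w - x1) * K w"
  shows "\<exists>g. g analytic_on {x1} \<and> eventually (\<lambda>w. N w / hf w = g w) (at x1)"
proof -
  define D where "D = (\<lambda>z. if z = x1 then deriv N x1 else (N z - N x1) / (z - x1))"
  have "D holomorphic_on S" unfolding D_def
    by (rule pole_lemma[OF N(1)]) (use N(2,3) interior_open in auto)
  hence "D analytic_on S" using N(2) analytic_on_open by blast
  hence Da: "D analytic_on {x1}" using N(3) analytic_on_subset by blast
  have "(\<lambda>w. D w / K w) analytic_on {x1}"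
    using Da K by (intro analytic_on_divide) auto
  moreover have "eventually (\<lambda>w. N w / hf w = D w / K w) (at x1)"
  proof -
    have "N w / hf w = D w / K w" if "w \<noteq> x1" for w
      using that fac[OF that] N(4) by (simp add: D_def)
    thus ?thesis by (auto simp: eventually_at_filter intro: always_eventually)
  qed
  ultimately show ?thesis by blast
qed

lemma transport_local:
  fixes G g :: "complex \<Rightarrow> complex"
  assumes p: "p \<noteq> 0" and per: "\<And>w. w \<noteq> 0 \<Longrightarrow> G (p * w) = G w"
    and g: "g analytic_on {x1}" "eventually (\<lambda>w. G w = g w) (at x1)" and x1: "x1 \<noteq> 0"
  shows "\<exists>g'. g' analytic_on {p powi m * x1} \<and> eventually (\<lambda>w. G w = g' w) (at (p powi m * x1))"
proof -
  define c where "c = p powi m"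
  have c0: "c \<noteq> 0" using p by (simp add: c_def)
  have fl: "filterlim (\<lambda>w. w / c) (at x1) (at (c * x1))" by (rule tendsto_scale_at[OF c0])
  have "(g \<circ> (\<lambda>w. w / c)) analytic_on {c * x1}"
    by (rule analytic_on_compose) (use c0 g(1) in \<open>auto intro!: analytic_intros\<close>)
  moreover have "eventually (\<lambda>w. G w = (g \<circ> (\<lambda>w. w / c)) w) (at (c * x1))"
  proof -
    have e1: "eventually (\<lambda>w. G (w / c) = g (w / c)) (at (c * x1))"
      using filterlim_iff[THEN iffD1, OF fl, rule_format, OF g(2)] by simp
    have e2: "eventually (\<lambda>w. w \<noteq> 0) (at (c * x1))"
      using c0 x1 by (intro eventually_neq_at_within)
    show ?thesis using e1 e2
    proof eventually_elim
      case (elim w)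
      have nz: "w / c \<noteq> 0" using elim c0 by simp
      have "G (c * (w / c)) = G (w / c)" unfolding c_def
        by (rule per_powi[where G = G and p = p, OF per p nz[unfolded c_def]])
      thus ?case using c0 elim by simp
    qed
  qed
  ultimately show ?thesis unfolding c_def by blast
qed

lemma three_term_generic:
  fixes p x y u v :: complex
  assumes p: "norm p < 1" "p \<noteq> 0" and nz: "x \<noteq> 0" "y \<noteq> 0" "u \<noteq> 0" "v \<noteq> 0"
    and gu: "ellE (u * u) p \<noteq> 0" and gv: "hh p u v \<noteq> 0"
  shows "hh p y x * hh p v u - hh p v x * hh p y u = (u / y) * hh p v y * hh p u x"
proof -
  define N where "N = (\<lambda>x. hh p y x * hh p v u - hh p v x * hh p y u)"
  define G where "G = (\<lambda>x. N x / hh p u x)"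
  have Nana: "N analytic_on (- {0})"
    unfolding N_def using nz
    by (intro analytic_intros hh_analytic[OF p(1)]) auto
  hence Nhol: "N holomorphic_on (- {0})" by (rule analytic_imp_holomorphic)
  have huana: "hh p u analytic_on (- {0})" by (rule hh_analytic[OF p(1) nz(3)])
  have perN: "N (p * w) = N w / w ^ 2" if "w \<noteq> 0" for w
    unfolding N_def using hh_shift[OF p that nz(2)] hh_shift[OF p that nz(4)] that
    by (simp add: diff_divide_distrib)
  have perG: "G (p * w) = G w" if "w \<noteq> 0" for w
    unfolding G_def using perN[OF that] hh_shift[OF p that nz(3)] that by simp
  have N1: "N (1 / u) = 0"
    unfolding N_def using hh_inv[OF p(1) nz(3)] nz by simp
  have Nu: "N u = 0" unfolding N_def by simp
  have ER: "ellE z p = (1 - z) * Rf p z" for z by (rule ellE_Rf[OF p(1)])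
  have loc1: "\<exists>g. g analytic_on {1 / u} \<and> eventually (\<lambda>w. G w = g w) (at (1 / u))"
    unfolding G_def
  proof (rule local_removable[OF Nhol _ _ N1])
    show "(\<lambda>w. - u * Rf p (w * u) * ellE (w / u) p) analytic_on {1 / u}"
      using nz by (intro analytic_intros Rf_comp_analytic[OF p(1)] ellE_comp_analytic[OF p(1)]) auto
    have "ellE (1 / (u * u)) p \<noteq> 0" using ellE_inv[OF p(1), of "u * u"] gu nz by simp
    thus "- u * Rf p (1 / u * u) * ellE (1 / u / u) p \<noteq> 0"
      using nz Rf_one_nz[OF p(1)] by simp
    fix w assume "w \<noteq> 1 / u"
    show "hh p u w = (w - 1 / u) * (- u * Rf p (w * u) * ellE (w / u) p)"
      unfolding hh_def ER[of "w * u"] using nz by (simp add: field_simps)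
  qed (use nz in auto)
  have locu: "\<exists>g. g analytic_on {u} \<and> eventually (\<lambda>w. G w = g w) (at u)"
    unfolding G_def
  proof (rule local_removable[OF Nhol _ _ Nu])
    show "(\<lambda>w. - (1 / u) * ellE (w * u) p * Rf p (w / u)) analytic_on {u}"
      using nz by (intro analytic_intros Rf_comp_analytic[OF p(1)] ellE_comp_analytic[OF p(1)]) auto
    show "- (1 / u) * ellE (u * u) p * Rf p (u / u) \<noteq> 0"
      using nz Rf_one_nz[OF p(1)] gu by simp
    fix w assume "w \<noteq> u"
    show "hh p u w = (w - u) * (- (1 / u) * ellE (w * u) p * Rf p (w / u))"
      unfolding hh_def ER[of "w / u"] using nz by (simp add: field_simps)
  qed (use nz in auto)
  have zero_cases: "(\<exists>m. x0 = p powi m * (1 / u)) \<or> (\<exists>m. x0 = p powi m * u)"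
    if z0: "hh p u x0 = 0" "x0 \<noteq> 0" for x0
  proof -
    from z0(1) have "ellE (x0 * u) p = 0 \<or> ellE (x0 / u) p = 0" unfolding hh_def by simp
    thus ?thesis
    proof
      assume a: "ellE (x0 * u) p = 0"
      have "x0 * u \<noteq> 0" using z0 nz by simp
      then obtain m where "x0 * u = p powi m" using ellE_zero_powi[OF p(1) _ a] by blast
      hence "x0 = p powi m * (1 / u)" using nz by (simp add: field_simps)
      thus ?thesis by blast
    next
      assume a: "ellE (x0 / u) p = 0"
      have "x0 / u \<noteq> 0" using z0 nz by simp
      then obtain m where "x0 / u = p powi m" using ellE_zero_powi[OF p(1) _ a] by blast
      hence "x0 = p powi m * u" using nz by (simp add: field_simps)
      thus ?thesis by blast
    qed
  qed
  have loc: "\<exists>g. g analytic_on {x0} \<and> eventually (\<lambda>w. G w = g w) (at x0)" if x0: "x0 \<noteq> 0" for x0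
  proof (cases "hh p u x0 = 0")
    case False
    have "G analytic_on {x0}" unfolding G_def
      using False x0 by (intro analytic_on_divide analytic_on_subset[OF Nana] analytic_on_subset[OF huana]) auto
    moreover have "eventually (\<lambda>w. G w = G w) (at x0)" by simp
    ultimately show ?thesis by blast
  next
    case True
    from zero_cases[OF True x0] show ?thesis
    proof
      assume "\<exists>m. x0 = p powi m * (1 / u)"
      then obtain m where m: "x0 = p powi m * (1 / u)" by blast
      obtain g where "g analytic_on {1 / u}" "eventually (\<lambda>w. G w = g w) (at (1 / u))" using loc1 by blast
      from transport_local[OF p(2) perG this] nz m show ?thesis by simp
    next
      assume "\<exists>m. x0 = p powi m * u"
      then obtain m where m: "x0 = p powi m * u" by blast
      obtain g where "g analytic_on {u}" "eventually (\<lambda>w. G w = g w) (at u)" using locu by blast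
      from transport_local[OF p(2) perG this] nz m show ?thesis by simp
    qed
  qed
  obtain c where c: "\<And>x. x \<noteq> 0 \<Longrightarrow> remove_sings G x = c"
    using periodic_liouville[OF p perG loc] by blast
  have Gx: "G x = c" if "hh p u x \<noteq> 0" "x \<noteq> 0" for x
  proof -
    have "G analytic_on {x}" unfolding G_def
      using that by (intro analytic_on_divide analytic_on_subset[OF Nana] analytic_on_subset[OF huana]) auto
    thus ?thesis using c[OF that(2)] by simp
  qed
  have perZ: "(N (p * w) = 0) = (N w = 0)" if "w \<noteq> 0" for w
    using perN[OF that] that by simp
  have Nall: "N x = c * hh p u x" if x0: "x \<noteq> 0" for x
  proof (cases "hh p u x = 0")
    case False
    thus ?thesis using Gx[OF False x0] unfolding G_def by (simp add: field_simps)
  next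
    case True
    from zero_cases[OF True x0] have "N x = 0"
    proof
      assume "\<exists>m. x = p powi m * (1 / u)"
      then obtain m where m: "x = p powi m * (1 / u)" by blast
      have nzu: "1 / u \<noteq> 0" using nz(3) by simp
      have "(N (p powi m * (1 / u)) = 0) = (N (1 / u) = 0)"
        using per_powi[where G = "\<lambda>w. N w = 0", OF perZ p(2) nzu] by simp
      thus ?thesis using m N1 by simp
    next
      assume "\<exists>m. x = p powi m * u"
      then obtain m where m: "x = p powi m * u" by blast
      have "(N (p powi m * u) = 0) = (N u = 0)"
        using per_powi[where G = "\<lambda>w. N w = 0", OF perZ p(2) nz(3)] by simp
      thus ?thesis using m Nu by simp
    qed
    thus ?thesis using True by simp
  qed
  have cv: "c = N v / hh p u v" using Gx[OF gv nz(4)] unfolding G_def by simp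
  have Nv: "N v = hh p y v * hh p v u" unfolding N_def using hh_self[OF p(1) nz(4)] by simp
  have s1: "hh p y v = - (v / y) * hh p v y" by (rule hh_swap[OF p(1) nz(2,4)])
  have s2: "hh p u v = - (v / u) * hh p v u" by (rule hh_swap[OF p(1) nz(3,4)])
  have hvu: "hh p v u \<noteq> 0" using gv s2 by auto
  have "c = (u / y) * hh p v y" unfolding cv Nv s1 s2 using hvu nz by (simp add: field_simps)
  thus ?thesis using Nall[OF nz(1)] unfolding N_def by simp
qed

lemma ev_nonzero:
  fixes f :: "complex \<Rightarrow> complex"
  assumes f: "f holomorphic_on (- {0})" and b: "\<beta> \<noteq> 0" "f \<beta> \<noteq> 0" and z0: "z0 \<noteq> 0"
  shows "eventually (\<lambda>z. f z \<noteq> 0) (at z0)"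
proof (cases "f z0 = 0")
  case True
  have conn: "connected (- {0::complex})" by (rule connected_punctured_universe) simp
  obtain r where r: "0 < r" "ball z0 r \<subseteq> - {0}" "\<And>z. z \<in> ball z0 r - {z0} \<Longrightarrow> f z \<noteq> 0"
    using isolated_zeros[OF f _ conn _ True, of \<beta>] b z0 by auto
  show ?thesis unfolding eventually_at
    using r by (intro exI[of _ r]) (auto simp: dist_commute)
next
  case False
  have "f analytic_on {z0}"
    by (rule holomorphic_on_imp_analytic_at[OF f]) (use z0 in auto)
  hence "isCont f z0" by (rule analytic_at_imp_isCont)
  hence "f \<midarrow>z0\<rightarrow> f z0" by (simp add: isCont_def)
  thus ?thesis using False by (rule tendsto_imp_eventually_ne)
qed

lemma ellE_sqrt_nz:
  fixes p z :: complex
  assumes p: "norm p < 1" "p \<noteq> 0" and z: "norm z = sqrt (norm p)"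
  shows "ellE z p \<noteq> 0"
proof
  assume E: "ellE z p = 0"
  have s1: "sqrt (norm p) < 1" using p by simp
  have "sqrt (norm p) * sqrt (norm p) < sqrt (norm p) * 1"
    by (rule mult_strict_left_mono) (use s1 p in auto)
  hence s2: "norm p < sqrt (norm p)" by simp
  have z0: "z \<noteq> 0" using z p by auto
  from ellE_eq_0_iff[OF p(1) z0] E consider k where "z * p ^ k = 1" | k where "z = p ^ Suc k" by blast
  then show False
  proof cases
    case 1
    have "norm (z * p ^ k) = sqrt (norm p) * norm p ^ k" by (simp add: norm_mult norm_power z)
    also have "\<dots> \<le> sqrt (norm p)"
      using p by (intro mult_left_le) (auto intro: power_le_one)
    finally show False using 1 s1 by simp
  next
    case 2
    have "norm (p ^ Suc k) \<le> norm p"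
      unfolding norm_power using p by (intro power_Suc_le_self) auto
    thus False using 2 z s2 by simp
  qed
qed

lemma ev_ellE_comp_nz:
  fixes p :: complex
  assumes p: "norm p < 1" "p \<noteq> 0" and f: "f analytic_on (- {0})" and fnz: "\<And>z. z \<noteq> 0 \<Longrightarrow> f z \<noteq> 0"
    and b: "\<beta> \<noteq> 0" "norm (f \<beta>) = sqrt (norm p)" and z0: "z0 \<noteq> 0"
  shows "eventually (\<lambda>z. ellE (f z) p \<noteq> 0) (at z0)"
proof (rule ev_nonzero[OF _ b(1) _ z0])
  show "(\<lambda>z. ellE (f z) p) holomorphic_on - {0}"
    by (rule analytic_imp_holomorphic, rule ellE_comp_analytic[OF p(1) f]) (use fnz in auto)
  show "ellE (f \<beta>) p \<noteq> 0" by (rule ellE_sqrt_nz[OF p b(2)])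
qed

lemma three_term:
  fixes p x y u v :: complex
  assumes p: "norm p < 1" and nz: "x \<noteq> 0" "y \<noteq> 0" "u \<noteq> 0" "v \<noteq> 0"
  shows "hh p y x * hh p v u - hh p v x * hh p y u = (u / y) * hh p v y * hh p u x"
proof (cases "p = 0")
  case True
  show ?thesis unfolding hh_def True ellE_p0 using nz
    by (simp add: field_simps)
next
  case False
  note p' = p False
  define F where "F = (\<lambda>u. hh p y x * hh p v u - hh p v x * hh p y u - (u / y) * hh p v y * hh p u x)"
  have Fana: "F analytic_on (- {0})"
    unfolding F_def hh_def using nz
    by (intro analytic_intros ellE_comp_analytic[OF p]) auto
  have "F analytic_on {u}" by (rule analytic_on_subset[OF Fana]) (use nz(3) in auto)
  hence "isCont F u" by (rule analytic_at_imp_isCont)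
  hence lim: "F \<midarrow>u\<rightarrow> F u" by (simp add: isCont_def)
  define s where "s = complex_of_real (sqrt (norm p))"
  have s0: "s \<noteq> 0" using False by (simp add: s_def)
  have ns: "norm s = sqrt (norm p)" by (simp add: s_def)
  define t where "t = complex_of_real (sqrt (sqrt (norm p)))"
  have t0: "t \<noteq> 0" using False by (simp add: t_def)
  have nt: "norm (t * t) = sqrt (norm p)" by (simp add: t_def norm_mult)
  have e1: "eventually (\<lambda>w. ellE (w * w) p \<noteq> 0) (at u)"
    by (rule ev_ellE_comp_nz[where f = "\<lambda>w. w * w" and \<beta> = t, OF p'])
       (use t0 nt nz in \<open>auto intro!: analytic_intros\<close>)
  have e2: "eventually (\<lambda>w. ellE (v * w) p \<noteq> 0) (at u)"
    by (rule ev_ellE_comp_nz[where f = "\<lambda>w. v * w" and \<beta> = "s / v", OF p'])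
       (use nz s0 ns in \<open>auto intro!: analytic_intros simp: norm_divide\<close>)
  have e3: "eventually (\<lambda>w. ellE (v / w) p \<noteq> 0) (at u)"
    by (rule ev_ellE_comp_nz[where f = "\<lambda>w. v / w" and \<beta> = "v / s", OF p'])
       (use nz s0 ns in \<open>auto intro!: analytic_intros simp: norm_divide\<close>)
  have e4: "eventually (\<lambda>w. w \<noteq> 0) (at u)" using nz(3) by (intro eventually_neq_at_within)
  have "eventually (\<lambda>w. F w = 0) (at u)"
    using e1 e2 e3 e4
  proof eventually_elim
    case (elim w)
    have "hh p w v \<noteq> 0" unfolding hh_def using elim by (simp add: mult.commute)
    thus ?case unfolding F_def using three_term_generic[OF p' nz(1,2) elim(4) nz(4) elim(1)] by simp
  qed
  hence "(\<lambda>w. 0) \<midarrow>u\<rightarrow> F u" using lim by (rule Lim_transform_eventually[rotated])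
  hence "F u = 0" using tendsto_unique[OF at_neq_bot] tendsto_const by metis
  thus ?thesis unfolding F_def by simp
qed

definition phi :: "complex \<Rightarrow> complex \<Rightarrow> complex \<Rightarrow> complex \<Rightarrow> complex" where
  "phi p A t c = ellE (c * t) p * ellE (A * t / c) p"

lemma hh_sq:
  assumes s: "s * s = A" "s \<noteq> 0"
  shows "hh p (s * t) (c / s) = ellE (c * t) p * ellE (c / (A * t)) p"
proof -
  have e1: "c / s * (s * t) = c * t" using s by (simp add: field_simps)
  have "s * (s * t) = A * t" using s(1) by (simp add: mult.assoc[symmetric])
  hence e2: "c / s / (s * t) = c / (A * t)" by (simp add: divide_divide_eq_left)
  show ?thesis unfolding hh_def e1 e2 by (rule refl)
qed

lemma phi_psi:
  assumes p: "norm p < 1" and nz: "A \<noteq> 0" "t \<noteq> 0" "c \<noteq> 0"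
  shows "phi p A t c = - (A * t / c) * (ellE (c * t) p * ellE (c / (A * t)) p)"
  unfolding phi_def using ellE_inv'[OF p, of "A * t" c] nz by simp

lemma psi_decomp:
  fixes p A a t0 tk c :: complex
  assumes p: "norm p < 1" and nz: "A \<noteq> 0" "a \<noteq> 0" "t0 \<noteq> 0" "tk \<noteq> 0" "c \<noteq> 0"
  defines "psi \<equiv> \<lambda>t w. ellE (w * t) p * ellE (w / (A * t)) p"
  shows "psi a c * psi t0 (1 / tk) - psi t0 c * psi a (1 / tk)
           = (1 / (A * a * tk)) * (ellE (A * a * t0) p * ellE (a / t0) p) * psi tk c"
proof -
  obtain s where s: "s * s = A" by (metis power2_csqrt power2_eq_square)
  have s0: "s \<noteq> 0" using s nz by auto
  have T: "hh p (s * a) (c / s) * hh p (s * t0) (1 / tk / s) - hh p (s * t0) (c / s) * hh p (s * a) (1 / tk / s)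
         = (1 / tk / s / (s * a)) * hh p (s * t0) (s * a) * hh p (1 / tk / s) (c / s)"
    by (rule three_term[OF p]) (use nz s0 in auto)
  have h1: "hh p (s * t) (w / s) = psi t w" for t w unfolding psi_def by (rule hh_sq[OF s s0])
  have h2: "hh p (s * t0) (s * a) = ellE (A * a * t0) p * ellE (a / t0) p"
  proof -
    have e1: "s * a * (s * t0) = A * a * t0" using s by (simp add: algebra_simps flip: s)
    have e2: "s * a / (s * t0) = a / t0" using s0 by simp
    show ?thesis unfolding hh_def e1 e2 by (rule refl)
  qed
  have h3: "hh p (1 / tk / s) (c / s) = psi tk c"
  proof -
    have "s * (s * tk) = A * tk" using s(1) by (simp add: mult.assoc[symmetric])
    hence e1: "c / s * (1 / tk / s) = c / (A * tk)" by (simp add: divide_divide_eq_left mult.commute)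
    have e2: "c / s / (1 / tk / s) = c * tk" using s0 nz by (simp add: field_simps)
    show ?thesis unfolding hh_def psi_def e1 e2 by (simp add: mult.commute)
  qed
  have h4: "1 / tk / s / (s * a) = 1 / (A * a * tk)" using s s0 by (simp add: field_simps flip: s)
  show ?thesis using T unfolding h1 h2 h3 h4 .
qed

lemma phi_decomp:
  fixes p A a t0 tk c :: complex
  assumes p: "norm p < 1" and nz: "A \<noteq> 0" "a \<noteq> 0" "t0 \<noteq> 0" "tk \<noteq> 0" "c \<noteq> 0"
  shows "phi p A a c * phi p A t0 (1 / tk)
     = phi p A t0 c * phi p A a (1 / tk) - (t0 / tk) * ellE (A * a * t0) p * ellE (a / t0) p * phi p A tk c"
proof -
  define psi where "psi = (\<lambda>t w. ellE (w * t) p * ellE (w / (A * t)) p)"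
  have D: "psi a c * psi t0 (1 / tk) - psi t0 c * psi a (1 / tk)
           = (1 / (A * a * tk)) * (ellE (A * a * t0) p * ellE (a / t0) p) * psi tk c"
    unfolding psi_def by (rule psi_decomp[OF p nz])
  have ph: "phi p A t w = - (A * t / w) * psi t w" if "t \<noteq> 0" "w \<noteq> 0" for t w
    unfolding psi_def by (rule phi_psi[OF p nz(1) that])
  have tk': "1 / tk \<noteq> 0" using nz by simp
  show ?thesis
    unfolding ph[OF nz(2) nz(5)] ph[OF nz(3) tk'] ph[OF nz(3) nz(5)] ph[OF nz(2) tk'] ph[OF nz(4) nz(5)]
    using D nz by (simp add: field_simps)
qed

lemma prod_hole_Suc:
  fixes g :: "nat \<Rightarrow> 'a::comm_monoid_mult"
  assumes "k \<le> n"
  shows "(\<Prod>j\<in>{..Suc n} - {Suc k}. g j) = g 0 * (\<Prod>j\<in>{..n} - {k}. g (Suc j))"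
proof -
  have "{..Suc n} - {Suc k} = insert 0 (Suc ` ({..n} - {k}))"
  proof (rule set_eqI)
    fix x show "x \<in> {..Suc n} - {Suc k} \<longleftrightarrow> x \<in> insert 0 (Suc ` ({..n} - {k}))"
      by (cases x) auto
  qed
  moreover have "0 \<notin> Suc ` ({..n} - {k})" by auto
  ultimately have "(\<Prod>j\<in>{..Suc n} - {Suc k}. g j) = g 0 * (\<Prod>j\<in>Suc ` ({..n} - {k}). g j)"
    by simp
  also have "(\<Prod>j\<in>Suc ` ({..n} - {k}). g j) = (\<Prod>j\<in>{..n} - {k}. g (Suc j))"
    by (subst prod.reindex) auto
  finally show ?thesis .
qed

lemma prod_hole_0:
  fixes g :: "nat \<Rightarrow> 'a::comm_monoid_mult"
  shows "(\<Prod>j\<in>{..Suc n} - {0}. g j) = (\<Prod>j\<le>n. g (Suc j))"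
proof -
  have "{..Suc n} - {0} = Suc ` {..n}"
  proof (rule set_eqI)
    fix x show "x \<in> {..Suc n} - {0} \<longleftrightarrow> x \<in> Suc ` {..n}"
      by (cases x) auto
  qed
  thus ?thesis by (simp add: prod.reindex)
qed

lemma prod_hole_mult:
  fixes g :: "nat \<Rightarrow> 'a::comm_monoid_mult"
  assumes "k \<le> n"
  shows "g k * (\<Prod>j\<in>{..n} - {k}. g j) = (\<Prod>j\<le>n. g j)"
  using assms by (simp add: prod.remove)

lemma phi_self:
  assumes p: "norm p < 1" and t: "t \<noteq> 0"
  shows "phi p A t (1 / t) = 0"
  unfolding phi_def using t ellE_one[OF p] by simp

lemma ex_interp:
  fixes t a :: "nat \<Rightarrow> complex" and A :: complex
  assumes p: "norm p < 1" and A: "A \<noteq> 0"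
    and tnz: "\<And>j. j \<le> n \<Longrightarrow> t j \<noteq> 0" and anz: "\<And>i. i < n \<Longrightarrow> a i \<noteq> 0"
    and dist: "\<And>j k. j \<le> n \<Longrightarrow> k \<le> n \<Longrightarrow> j \<noteq> k \<Longrightarrow> phi p A (t j) (1 / t k) \<noteq> 0"
  shows "\<exists>C. \<forall>c. c \<noteq> 0 \<longrightarrow> (\<Prod>i<n. phi p A (a i) c) = (\<Sum>k\<le>n. C k * (\<Prod>j\<in>{..n} - {k}. phi p A (t j) c))"
  using tnz anz dist
proof (induction n arbitrary: t)
  case 0
  show ?case by (intro exI[of _ "\<lambda>_. 1"]) simp
next
  case (Suc n)
  define t' where "t' = (\<lambda>j. t (Suc j))"
  have "\<exists>C. \<forall>c. c \<noteq> 0 \<longrightarrow> (\<Prod>i<n. phi p A (a i) c) = (\<Sum>k\<le>n. C k * (\<Prod>j\<in>{..n} - {k}. phi p A (t' j) c))"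
  proof (rule Suc.IH)
    show "\<And>i. i < n \<Longrightarrow> a i \<noteq> 0" using Suc.prems(2) by simp
    show "\<And>j. j \<le> n \<Longrightarrow> t' j \<noteq> 0" unfolding t'_def using Suc.prems(1) by simp
    show "\<And>j k. j \<le> n \<Longrightarrow> k \<le> n \<Longrightarrow> j \<noteq> k \<Longrightarrow> phi p A (t' j) (1 / t' k) \<noteq> 0"
      unfolding t'_def using Suc.prems(3) by simp
  qed
  then obtain C' where C': "\<And>c. c \<noteq> 0 \<Longrightarrow> (\<Prod>i<n. phi p A (a i) c) = (\<Sum>k\<le>n. C' k * (\<Prod>j\<in>{..n} - {k}. phi p A (t' j) c))"
    by blast
  define d where "d = (\<lambda>k. phi p A (t 0) (1 / t (Suc k)))"
  have d0: "d k \<noteq> 0" if "k \<le> n" for k unfolding d_def using Suc.prems(3)[of 0 "Suc k"] that by simp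
  define \<alpha> where "\<alpha> = (\<lambda>k. phi p A (a n) (1 / t (Suc k)) / d k)"
  define \<beta> where "\<beta> = (\<lambda>k. - (t 0 / t (Suc k)) * ellE (A * a n * t 0) p * ellE (a n / t 0) p / d k)"
  have dec: "phi p A (a n) c = \<alpha> k * phi p A (t 0) c + \<beta> k * phi p A (t (Suc k)) c"
    if "k \<le> n" "c \<noteq> 0" for k c
  proof -
    have "phi p A (a n) c * d k = phi p A (t 0) c * phi p A (a n) (1 / t (Suc k))
        - (t 0 / t (Suc k)) * ellE (A * a n * t 0) p * ellE (a n / t 0) p * phi p A (t (Suc k)) c"
      unfolding d_def by (rule phi_decomp[OF p A]) (use Suc.prems(1,2) that in auto)
    thus ?thesis using d0[OF that(1)] unfolding \<alpha>_def \<beta>_def by (simp add: field_simps)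
  qed
  define C where "C = (\<lambda>k. if k = 0 then (\<Sum>k'\<le>n. C' k' * \<beta> k') else C' (k - 1) * \<alpha> (k - 1))"
  show ?case
  proof (intro exI[of _ C] allI impI)
    fix c :: complex assume c: "c \<noteq> 0"
    let ?g = "\<lambda>j. phi p A (t j) c"
    have "(\<Prod>i<Suc n. phi p A (a i) c) = phi p A (a n) c * (\<Sum>k\<le>n. C' k * (\<Prod>j\<in>{..n} - {k}. ?g (Suc j)))"
      using C'[OF c] unfolding t'_def by (simp add: mult.commute)
    also have "\<dots> = (\<Sum>k\<le>n. C' k * (phi p A (a n) c * (\<Prod>j\<in>{..n} - {k}. ?g (Suc j))))"
      by (simp add: sum_distrib_left mult.assoc mult.left_commute)
    also have "\<dots> = (\<Sum>k\<le>n. C' k * (\<alpha> k * (\<Prod>j\<in>{..Suc n} - {Suc k}. ?g j)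
                                  + \<beta> k * (\<Prod>j\<in>{..Suc n} - {0}. ?g j)))"
    proof (rule sum.cong[OF refl])
      fix k assume k: "k \<in> {..n}"
      have "phi p A (a n) c * (\<Prod>j\<in>{..n} - {k}. ?g (Suc j))
          = \<alpha> k * (?g 0 * (\<Prod>j\<in>{..n} - {k}. ?g (Suc j))) + \<beta> k * (?g (Suc k) * (\<Prod>j\<in>{..n} - {k}. ?g (Suc j)))"
      proof -
        have dk: "phi p A (a n) c = \<alpha> k * ?g 0 + \<beta> k * ?g (Suc k)" using dec[of k c] k c by auto
        show ?thesis unfolding dk by (simp add: algebra_simps)
      qed
      also have "?g 0 * (\<Prod>j\<in>{..n} - {k}. ?g (Suc j)) = (\<Prod>j\<in>{..Suc n} - {Suc k}. ?g j)"
        using prod_hole_Suc[of k n ?g] k by simp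
      also have "?g (Suc k) * (\<Prod>j\<in>{..n} - {k}. ?g (Suc j)) = (\<Prod>j\<in>{..Suc n} - {0}. ?g j)"
        using prod_hole_mult[of k n "\<lambda>j. ?g (Suc j)"] prod_hole_0[of ?g n] k by simp
      finally show "C' k * (phi p A (a n) c * (\<Prod>j\<in>{..n} - {k}. ?g (Suc j))) =
          C' k * (\<alpha> k * (\<Prod>j\<in>{..Suc n} - {Suc k}. ?g j) + \<beta> k * (\<Prod>j\<in>{..Suc n} - {0}. ?g j))"
        by simp
    qed
    also have "\<dots> = (\<Sum>k\<le>n. C (Suc k) * (\<Prod>j\<in>{..Suc n} - {Suc k}. ?g j))
                    + C 0 * (\<Prod>j\<in>{..Suc n} - {0}. ?g j)"
      unfolding C_def by (simp add: algebra_simps sum.distrib sum_distrib_right)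
    also have "\<dots> = (\<Sum>k\<le>Suc n. C k * (\<Prod>j\<in>{..Suc n} - {k}. ?g j))"
      by (rule sym, subst sum.atMost_Suc_shift, rule add.commute)
    finally show "(\<Prod>i<Suc n. phi p A (a i) c) = (\<Sum>k\<le>Suc n. C k * (\<Prod>j\<in>{..Suc n} - {k}. ?g j))" .
  qed
qed

lemma interp:
  fixes t a :: "nat \<Rightarrow> complex" and A c :: complex
  assumes p: "norm p < 1" and A: "A \<noteq> 0"
    and tnz: "\<And>j. j \<le> n \<Longrightarrow> t j \<noteq> 0" and anz: "\<And>i. i < n \<Longrightarrow> a i \<noteq> 0"
    and dist: "\<And>j k. j \<le> n \<Longrightarrow> k \<le> n \<Longrightarrow> j \<noteq> k \<Longrightarrow> phi p A (t j) (1 / t k) \<noteq> 0"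
    and c: "c \<noteq> 0"
  shows "(\<Prod>i<n. phi p A (a i) c) =
    (\<Sum>k\<le>n. (\<Prod>i<n. phi p A (a i) (1 / t k)) / (\<Prod>j\<in>{..n} - {k}. phi p A (t j) (1 / t k))
             * (\<Prod>j\<in>{..n} - {k}. phi p A (t j) c))"
proof -
  have "\<exists>C. \<forall>c. c \<noteq> 0 \<longrightarrow> (\<Prod>i<n. phi p A (a i) c) = (\<Sum>k\<le>n. C k * (\<Prod>j\<in>{..n} - {k}. phi p A (t j) c))"
    by (rule ex_interp[OF p A]) (use tnz anz dist in auto)
  then obtain C where C: "\<And>c. c \<noteq> 0 \<Longrightarrow> (\<Prod>i<n. phi p A (a i) c) = (\<Sum>k\<le>n. C k * (\<Prod>j\<in>{..n} - {k}. phi p A (t j) c))"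
    by blast
  have Ck: "C k = (\<Prod>i<n. phi p A (a i) (1 / t k)) / (\<Prod>j\<in>{..n} - {k}. phi p A (t j) (1 / t k))"
    if k: "k \<le> n" for k
  proof -
    have tk: "1 / t k \<noteq> 0" using tnz[OF k] by simp
    have z: "(\<Prod>j\<in>{..n} - {k'}. phi p A (t j) (1 / t k)) = 0" if "k' \<le> n" "k' \<noteq> k" for k'
    proof -
      have "k \<in> {..n} - {k'}" using k that by auto
      moreover have "phi p A (t k) (1 / t k) = 0" by (rule phi_self[OF p tnz[OF k]])
      ultimately show ?thesis by (metis finite_Diff finite_atMost prod_zero_iff)
    qed
    have "(\<Prod>i<n. phi p A (a i) (1 / t k)) = (\<Sum>k'\<le>n. C k' * (\<Prod>j\<in>{..n} - {k'}. phi p A (t j) (1 / t k)))"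
      by (rule C[OF tk])
    also have "\<dots> = C k * (\<Prod>j\<in>{..n} - {k}. phi p A (t j) (1 / t k))"
    proof -
      have "(\<Sum>k'\<le>n. C k' * (\<Prod>j\<in>{..n} - {k'}. phi p A (t j) (1 / t k)))
          = C k * (\<Prod>j\<in>{..n} - {k}. phi p A (t j) (1 / t k))
            + (\<Sum>k'\<in>{..n} - {k}. C k' * (\<Prod>j\<in>{..n} - {k'}. phi p A (t j) (1 / t k)))"
        using k by (simp add: sum.remove)
      also have "(\<Sum>k'\<in>{..n} - {k}. C k' * (\<Prod>j\<in>{..n} - {k'}. phi p A (t j) (1 / t k))) = 0"
        using z by (intro sum.neutral) auto
      finally show ?thesis by simp
    qed
    finally have e: "(\<Prod>i<n. phi p A (a i) (1 / t k)) = C k * (\<Prod>j\<in>{..n} - {k}. phi p A (t j) (1 / t k))" .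
    have "(\<Prod>j\<in>{..n} - {k}. phi p A (t j) (1 / t k)) \<noteq> 0"
      using dist k by (subst prod_zero_iff) auto
    thus ?thesis using e by (simp add: field_simps)
  qed
  show ?thesis using C[OF c] Ck by simp
qed

definition Pr :: "complex \<Rightarrow> complex \<Rightarrow> complex \<Rightarrow> nat \<Rightarrow> complex" where
  "Pr p x B m = (\<Prod>i<m. ellE (x * B ^ i) p)"

lemma efac_Pr: "efac x B p (int m) = Pr p x B m"
proof (cases "m = 0")
  case False
  hence "int m > 0" by simp
  thus ?thesis unfolding efac_def Pr_def by simp
qed (simp add: efac_def Pr_def)

lemma Pr_0 [simp]: "Pr p x B 0 = 1" by (simp add: Pr_def)

lemma Pr_Suc: "Pr p x B (Suc m) = Pr p x B m * ellE (x * B ^ m) p"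
  by (simp add: Pr_def)

lemma Pr_add: "Pr p x B (m + l) = Pr p x B m * Pr p (x * B ^ m) B l"
proof (induction l)
  case 0 then show ?case by simp
next
  case (Suc l)
  have "Pr p x B (m + Suc l) = Pr p x B (m + l) * ellE (x * B ^ (m + l)) p"
    by (simp add: Pr_Suc)
  also have "\<dots> = Pr p x B m * (Pr p (x * B ^ m) B l * ellE (x * B ^ m * B ^ l) p)"
    by (simp add: Suc power_add mult.assoc)
  finally show ?case by (simp add: Pr_Suc)
qed

lemma Pr_Suc': "Pr p x B (Suc m) = ellE x p * Pr p (x * B) B m"
  using Pr_add[of p x B 1 m] by (simp add: Pr_def)

lemma Pr_nz_iff: "Pr p x B n \<noteq> 0 \<longleftrightarrow> (\<forall>i<n. ellE (x * B ^ i) p \<noteq> 0)"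
  unfolding Pr_def by (auto simp: prod_zero_iff)

lemma Pr_nz_mono: "Pr p x B n \<noteq> 0 \<Longrightarrow> k \<le> n \<Longrightarrow> Pr p x B k \<noteq> 0"
  by (auto simp: Pr_nz_iff)

lemma Pr_base: "(\<Prod>i<r. Pr p (x * q ^ i) (q ^ r) k) = Pr p x q (r * k)"
proof (induction k)
  case 0 then show ?case by simp
next
  case (Suc k)
  have "(\<Prod>i<r. Pr p (x * q ^ i) (q ^ r) (Suc k))
      = (\<Prod>i<r. Pr p (x * q ^ i) (q ^ r) k) * (\<Prod>i<r. ellE (x * q ^ i * (q ^ r) ^ k) p)"
    by (simp add: Pr_Suc prod.distrib)
  also have "(\<Prod>i<r. ellE (x * q ^ i * (q ^ r) ^ k) p) = Pr p (x * q ^ (r * k)) q r"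
    unfolding Pr_def by (intro prod.cong refl) (simp add: power_mult[symmetric] mult.commute mult.left_commute mult.assoc)
  also have "(\<Prod>i<r. Pr p (x * q ^ i) (q ^ r) k) = Pr p x q (r * k)" by (rule Suc.IH)
  also have "Pr p x q (r * k) * Pr p (x * q ^ (r * k)) q r = Pr p x q (r * k + r)"
    by (rule Pr_add[symmetric])
  also have "r * k + r = r * Suc k" by simp
  finally show ?case .
qed

lemma Pr_rev_inv:
  fixes z q :: complex assumes p: "norm p < 1" and z: "z \<noteq> 0" and q: "q \<noteq> 0"
  shows "(\<Prod>j<n. ellE (q ^ j / z) p) = (\<Prod>j<n. - (q ^ j / z)) * Pr p (z * q / q ^ n) q n"
proof -
  have "(\<Prod>j<n. ellE (q ^ j / z) p) = (\<Prod>j<n. - (q ^ j / z) * ellE (z / q ^ j) p)"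
    by (intro prod.cong refl ellE_inv'[OF p]) (use z q in auto)
  also have "\<dots> = (\<Prod>j<n. - (q ^ j / z)) * (\<Prod>j<n. ellE (z / q ^ j) p)"
    by (rule prod.distrib)
  also have "(\<Prod>j<n. ellE (z / q ^ j) p) = (\<Prod>i<n. ellE (z / q ^ (n - Suc i)) p)"
    by (rule prod.nat_diff_reindex[symmetric])
  also have "\<dots> = Pr p (z * q / q ^ n) q n"
    unfolding Pr_def
  proof (intro prod.cong refl)
    fix i assume "i \<in> {..<n}"
    hence "n = (n - Suc i) + 1 + i" by simp
    hence "q ^ n = q ^ ((n - Suc i) + 1 + i)" by (rule arg_cong)
    hence "q ^ n = q ^ (n - Suc i) * q * q ^ i" by (simp only: power_add power_one_right)
    thus "ellE (z / q ^ (n - Suc i)) p = ellE (z * q / q ^ n * q ^ i) p"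
      using q by (simp add: field_simps)
  qed
  finally show ?thesis .
qed

lemma pow_split:
  assumes "i < k" shows "(Q::complex) ^ k = Q ^ (k - Suc i) * Q ^ Suc i"
proof -
  have "k = (k - Suc i) + Suc i" using assms by simp
  hence "Q ^ k = Q ^ ((k - Suc i) + Suc i)" by (rule arg_cong)
  thus ?thesis by (simp only: power_add)
qed

lemma Qpart:
  fixes Q :: complex
  assumes p: "norm p < 1" and Q: "Q \<noteq> 0" and k: "k \<le> n"
  shows "Pr p (1 / Q ^ n) Q k * Q ^ k * (\<Prod>j\<in>{..n} - {k}. ellE (Q ^ j / Q ^ k) p) * Q ^ (k * n)
         = Pr p Q Q k * Pr p Q Q n"
proof -
  define g where "g = (\<lambda>j. ellE (Q ^ j / Q ^ k) p)"
  have S1: "{..n} - {k} = {..<k} \<union> {Suc k..<Suc n}" using k by auto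
  have "(\<Prod>j\<in>{..n} - {k}. g j) = (\<Prod>j<k. g j) * (\<Prod>j\<in>{Suc k..<Suc n}. g j)"
    unfolding S1 by (rule prod.union_disjoint) auto
  moreover have S2: "(\<Prod>j<k. g j) = (\<Prod>l<k. ellE (1 / Q ^ Suc l) p)"
  proof -
    have "(\<Prod>j<k. g j) = (\<Prod>l<k. g (k - Suc l))" by (rule prod.nat_diff_reindex[symmetric])
    also have "\<dots> = (\<Prod>l<k. ellE (1 / Q ^ Suc l) p)"
    proof (intro prod.cong refl)
      fix l assume "l \<in> {..<k}"
      hence "Q ^ k = Q ^ (k - Suc l) * Q ^ Suc l" by (intro pow_split) auto
      thus "g (k - Suc l) = ellE (1 / Q ^ Suc l) p" unfolding g_def using Q by simp
    qed
    finally show ?thesis .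
  qed
  moreover have S3: "(\<Prod>j\<in>{Suc k..<Suc n}. g j) = Pr p Q Q (n - k)"
  proof -
    have "{Suc k..<Suc n} = {0 + Suc k..<(n - k) + Suc k}" using k by simp
    hence "(\<Prod>j\<in>{Suc k..<Suc n}. g j) = (\<Prod>i\<in>{0..<n - k}. g (i + Suc k))"
      by (simp only: prod.shift_bounds_nat_ivl)
    also have "\<dots> = Pr p Q Q (n - k)" unfolding Pr_def g_def
      using Q by (intro prod.cong) (auto simp: power_add atLeast0LessThan)
    finally show ?thesis .
  qed
  ultimately have DQ: "(\<Prod>j\<in>{..n} - {k}. g j) = (\<Prod>l<k. ellE (1 / Q ^ Suc l) p) * Pr p Q Q (n - k)"
    by simp
  have S4: "Pr p (1 / Q ^ n) Q k = (\<Prod>l<k. ellE (1 / Q ^ (n - l)) p)"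
    unfolding Pr_def
  proof (intro prod.cong refl)
    fix l assume "l \<in> {..<k}"
    hence "Q ^ n = Q ^ (n - l) * Q ^ l" using k by (simp flip: power_add)
    thus "ellE (1 / Q ^ n * Q ^ l) p = ellE (1 / Q ^ (n - l)) p" using Q by simp
  qed
  have S5: "(\<Prod>l<k. ellE (1 / Q ^ (n - l)) p) * (\<Prod>l<k. ellE (1 / Q ^ Suc l) p)
      = (\<Prod>l<k. ellE (Q ^ (n - l)) p) * Pr p Q Q k / (Q ^ Suc n) ^ k"
  proof -
    have "(\<Prod>l<k. ellE (1 / Q ^ (n - l)) p) * (\<Prod>l<k. ellE (1 / Q ^ Suc l) p)
        = (\<Prod>l<k. ellE (1 / Q ^ (n - l)) p * ellE (1 / Q ^ Suc l) p)"
      by (simp add: prod.distrib)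
    also have "\<dots> = (\<Prod>l<k. ellE (Q ^ (n - l)) p * ellE (Q ^ Suc l) p / Q ^ Suc n)"
    proof (intro prod.cong refl)
      fix l assume "l \<in> {..<k}"
      hence "l < n" using k by simp
      hence e: "Q ^ Suc n = Q ^ (n - l) * Q ^ Suc l" using pow_split[of l "Suc n" Q] by simp
      have a: "ellE (1 / Q ^ (n - l)) p = - ellE (Q ^ (n - l)) p / Q ^ (n - l)"
        by (rule ellE_inv[OF p]) (use Q in simp)
      have b: "ellE (1 / Q ^ Suc l) p = - ellE (Q ^ Suc l) p / Q ^ Suc l"
        by (rule ellE_inv[OF p]) (use Q in simp)
      have "ellE (1 / Q ^ (n - l)) p * ellE (1 / Q ^ Suc l) p
          = (- ellE (Q ^ (n - l)) p / Q ^ (n - l)) * (- ellE (Q ^ Suc l) p / Q ^ Suc l)"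
        by (simp only: a b)
      also have "\<dots> = ellE (Q ^ (n - l)) p * ellE (Q ^ Suc l) p / (Q ^ (n - l) * Q ^ Suc l)"
        by (simp add: field_simps)
      finally show "ellE (1 / Q ^ (n - l)) p * ellE (1 / Q ^ Suc l) p
          = ellE (Q ^ (n - l)) p * ellE (Q ^ Suc l) p / Q ^ Suc n"
        by (simp only: e)
    qed
    also have "\<dots> = (\<Prod>l<k. ellE (Q ^ (n - l)) p) * (\<Prod>l<k. ellE (Q ^ Suc l) p) / (Q ^ Suc n) ^ k"
      by (simp add: prod.distrib prod_dividef)
    also have "(\<Prod>l<k. ellE (Q ^ Suc l) p) = Pr p Q Q k" unfolding Pr_def by simp
    finally show ?thesis .
  qed
  have S6: "(\<Prod>l<k. ellE (Q ^ (n - l)) p) * Pr p Q Q (n - k) = Pr p Q Q n"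
  proof -
    have "Pr p Q Q n = Pr p Q Q ((n - k) + k)" using k by simp
    also have "\<dots> = Pr p Q Q (n - k) * Pr p (Q * Q ^ (n - k)) Q k" by (rule Pr_add)
    also have "Pr p (Q * Q ^ (n - k)) Q k = (\<Prod>l<k. ellE (Q * Q ^ (n - k) * Q ^ (k - Suc l)) p)"
      unfolding Pr_def by (rule prod.nat_diff_reindex[symmetric])
    also have "\<dots> = (\<Prod>l<k. ellE (Q ^ (n - l)) p)"
    proof (intro prod.cong refl)
      fix l assume "l \<in> {..<k}"
      hence "n - l = Suc ((n - k) + (k - Suc l))" using k by simp
      hence "Q ^ (n - l) = Q ^ Suc ((n - k) + (k - Suc l))" by (rule arg_cong)
      hence "Q ^ (n - l) = Q * Q ^ (n - k) * Q ^ (k - Suc l)" by (simp only: power_add power_Suc mult.assoc)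
      thus "ellE (Q * Q ^ (n - k) * Q ^ (k - Suc l)) p = ellE (Q ^ (n - l)) p"
        by simp
    qed
    finally show ?thesis by (simp add: mult.commute)
  qed
  have "Pr p (1 / Q ^ n) Q k * Q ^ k * (\<Prod>j\<in>{..n} - {k}. g j) * Q ^ (k * n)
      = ((\<Prod>l<k. ellE (1 / Q ^ (n - l)) p) * (\<Prod>l<k. ellE (1 / Q ^ Suc l) p)) * Pr p Q Q (n - k)
        * (Q ^ k * Q ^ (k * n))"
    unfolding DQ S4 by (simp add: mult_ac)
  also have "\<dots> = ((\<Prod>l<k. ellE (Q ^ (n - l)) p) * Pr p Q Q (n - k)) * Pr p Q Q k
        * (Q ^ k * Q ^ (k * n) / (Q ^ Suc n) ^ k)"
    unfolding S5 by (simp add: mult_ac)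
  also have "Q ^ k * Q ^ (k * n) / (Q ^ Suc n) ^ k = 1"
  proof -
    have "Q ^ k * Q ^ (k * n) = (Q ^ Suc n) ^ k"
      by (simp add: power_mult_distrib power_mult[symmetric] mult.commute)
    thus ?thesis using Q by simp
  qed
  finally show ?thesis unfolding S6 g_def by (simp add: mult_ac)
qed

lemma Apart:
  fixes Q A :: complex
  assumes k: "k \<le> n"
  shows "ellE (A * Q ^ (2 * k)) p * Pr p A Q k * (\<Prod>j\<in>{..n} - {k}. ellE (A * Q ^ (j + k)) p)
       = ellE A p * Pr p (A * Q) Q n * Pr p (A * Q ^ (n + 1)) Q k"
proof -
  have "ellE (A * Q ^ (2 * k)) p * (\<Prod>j\<in>{..n} - {k}. ellE (A * Q ^ (j + k)) p)
      = (\<Prod>j\<le>n. ellE (A * Q ^ (j + k)) p)"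
    using prod_hole_mult[OF k, of "\<lambda>j. ellE (A * Q ^ (j + k)) p"] by (simp add: mult_2)
  also have "\<dots> = Pr p (A * Q ^ k) Q (n + 1)"
    unfolding Pr_def by (simp add: lessThan_Suc_atMost[symmetric] power_add mult_ac)
  finally have 1: "ellE (A * Q ^ (2 * k)) p * (\<Prod>j\<in>{..n} - {k}. ellE (A * Q ^ (j + k)) p)
      = Pr p (A * Q ^ k) Q (n + 1)" .
  have "Pr p A Q k * Pr p (A * Q ^ k) Q (n + 1) = Pr p A Q (k + (n + 1))" by (rule Pr_add[symmetric])
  also have "\<dots> = Pr p A Q ((n + 1) + k)" by (simp add: add.commute)
  also have "\<dots> = Pr p A Q (n + 1) * Pr p (A * Q ^ (n + 1)) Q k" by (rule Pr_add)
  also have "Pr p A Q (n + 1) = ellE A p * Pr p (A * Q) Q n" using Pr_Suc'[of p A Q n] by simp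
  finally have 2: "Pr p A Q k * Pr p (A * Q ^ k) Q (n + 1) = ellE A p * Pr p (A * Q) Q n * Pr p (A * Q ^ (n + 1)) Q k" .
  show ?thesis using 1 2 by (simp add: mult_ac)
qed

lemma ABpart:
  fixes a b q p :: complex and r n k :: nat
  assumes p: "norm p < 1" and nz: "a \<noteq> 0" "b \<noteq> 0" "q \<noteq> 0"
  shows "Pr p (b * q) q (r * k) * Pr p (a * q ^ n) q (r * k) * Pr p a q n * Pr p (1 / b) q n
       = (q ^ r) ^ (k * n) * (\<Prod>i<n. phi p (a * b) (q ^ i / b) (1 / (q ^ r) ^ k))
         * Pr p a q (r * k) * Pr p (b * q / q ^ n) q (r * k)"
proof -
  define Q where "Q = q ^ r"
  define B' where "B' = b * q / q ^ n"
  have Q0: "Q \<noteq> 0" using nz by (simp add: Q_def)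
  have qrk: "q ^ (r * k) = Q ^ k" by (simp add: Q_def power_mult)
  have i: "Pr p (a * q ^ n) q (r * k) * Pr p a q n = Pr p a q (r * k) * Pr p (a * Q ^ k) q n"
  proof -
    have "Pr p a q n * Pr p (a * q ^ n) q (r * k) = Pr p a q (n + r * k)" by (rule Pr_add[symmetric])
    also have "\<dots> = Pr p a q (r * k + n)" by (simp add: add.commute)
    also have "\<dots> = Pr p a q (r * k) * Pr p (a * Q ^ k) q n" unfolding qrk[symmetric] by (rule Pr_add)
    finally show ?thesis by (simp only: mult.commute)
  qed
  have ii: "Pr p (b * q) q (r * k) * Pr p B' q n = Pr p B' q (r * k) * Pr p (B' * Q ^ k) q n"
  proof -
    have bq: "B' * q ^ n = b * q" using nz by (simp add: B'_def)
    have "Pr p B' q n * Pr p (B' * q ^ n) q (r * k) = Pr p B' q (n + r * k)" by (rule Pr_add[symmetric])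
    also have "\<dots> = Pr p B' q (r * k + n)" by (simp add: add.commute)
    also have "\<dots> = Pr p B' q (r * k) * Pr p (B' * Q ^ k) q n" unfolding qrk[symmetric] by (rule Pr_add)
    finally show ?thesis unfolding bq by (simp only: mult.commute)
  qed
  define mono0 where "mono0 = (\<Prod>i<n. - (q ^ i / b))"
  have rev0: "Pr p (1 / b) q n = mono0 * Pr p B' q n"
  proof -
    have "Pr p (1 / b) q n = (\<Prod>i<n. ellE (q ^ i / b) p)" unfolding Pr_def by simp
    also have "\<dots> = mono0 * Pr p B' q n" unfolding mono0_def B'_def by (rule Pr_rev_inv[OF p nz(2,3)])
    finally show ?thesis .
  qed
  have f: "(\<Prod>i<n. phi p (a * b) (q ^ i / b) (1 / Q ^ k))
      = (\<Prod>i<n. ellE (q ^ i / (b * Q ^ k)) p) * Pr p (a * Q ^ k) q n"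
  proof -
    have "(\<Prod>i<n. phi p (a * b) (q ^ i / b) (1 / Q ^ k))
        = (\<Prod>i<n. ellE (q ^ i / (b * Q ^ k)) p * ellE (a * Q ^ k * q ^ i) p)"
      unfolding phi_def using nz Q0 by (intro prod.cong refl) (simp add: field_simps)
    thus ?thesis unfolding Pr_def by (simp add: prod.distrib)
  qed
  have zk: "b * Q ^ k \<noteq> 0" using nz Q0 by simp
  have revk: "(\<Prod>i<n. ellE (q ^ i / (b * Q ^ k)) p) = mono0 * (1 / Q ^ k) ^ n * Pr p (B' * Q ^ k) q n"
  proof -
    have "(\<Prod>i<n. ellE (q ^ i / (b * Q ^ k)) p)
        = (\<Prod>i<n. - (q ^ i / (b * Q ^ k))) * Pr p (b * Q ^ k * q / q ^ n) q n"
      by (rule Pr_rev_inv[OF p zk nz(3)])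
    also have "(\<Prod>i<n. - (q ^ i / (b * Q ^ k))) = (\<Prod>i<n. - (q ^ i / b) * (1 / Q ^ k))"
      by (intro prod.cong refl) (simp add: field_simps)
    also have "\<dots> = mono0 * (1 / Q ^ k) ^ n" unfolding mono0_def by (simp only: prod.distrib prod_constant card_lessThan)
    also have "b * Q ^ k * q / q ^ n = B' * Q ^ k" by (simp add: B'_def field_simps)
    finally show ?thesis .
  qed
  have Qk: "Q ^ (k * n) * (1 / Q ^ k) ^ n = 1"
    using Q0 by (simp add: power_mult power_one_over)
  have "Pr p (b * q) q (r * k) * Pr p (a * q ^ n) q (r * k) * Pr p a q n * Pr p (1 / b) q n
      = (Pr p (a * q ^ n) q (r * k) * Pr p a q n) * mono0 * (Pr p (b * q) q (r * k) * Pr p B' q n)"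
    unfolding rev0 by (simp add: mult_ac)
  also have "\<dots> = Pr p a q (r * k) * Pr p (a * Q ^ k) q n * mono0 * Pr p B' q (r * k) * Pr p (B' * Q ^ k) q n"
    unfolding i ii by (simp add: mult_ac)
  also have "\<dots> = (Q ^ (k * n) * (1 / Q ^ k) ^ n) * (mono0 * Pr p (B' * Q ^ k) q n * Pr p (a * Q ^ k) q n)
        * Pr p a q (r * k) * Pr p B' q (r * k)"
    unfolding Qk by (simp add: mult_ac)
  also have "\<dots> = Q ^ (k * n) * (\<Prod>i<n. phi p (a * b) (q ^ i / b) (1 / Q ^ k)) * Pr p a q (r * k) * Pr p B' q (r * k)"
    unfolding f revk by (simp add: mult_ac)
  finally show ?thesis unfolding Q_def B'_def .
qed

lemma prod_list_upt_map:
  "(\<Prod>x\<leftarrow>map f [m..<n]. g x) = (\<Prod>i\<in>{m..<n}. g (f i))"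
  by (simp add: prod.distinct_set_conv_list[symmetric] o_def)

lemma prod_shift1:
  "(\<Prod>i\<in>{1..<r + 1}. (g :: nat \<Rightarrow> complex) i) = (\<Prod>i<r. g (Suc i))"
proof -
  have "(\<Prod>i\<in>{0 + 1..<r + 1}. g i) = (\<Prod>i\<in>{0..<r}. g (i + 1))" by (rule prod.shift_bounds_nat_ivl)
  thus ?thesis by (simp add: atLeast0LessThan)
qed

lemma powi_neg_rn:
  fixes q :: complex assumes q: "q \<noteq> 0"
  shows "q powi (- int (r * n)) = 1 / (q ^ r) ^ n"
  by (simp only: power_int_minus_divide power_int_of_nat power_mult)

lemma params_num:
  fixes a b c q p :: complex and r n k :: nat
  assumes nz: "q \<noteq> 0"
  shows "(\<Prod>x\<leftarrow>[c, a * b / c] @ map (\<lambda>i. b * q ^ i) [1..<r + 1]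
                     @ map (\<lambda>i. a * q ^ (n + i)) [0..<r] @ [q powi (- int (r * n))]. efac x (q ^ r) p (int k))
    = Pr p c (q ^ r) k * Pr p (a * b / c) (q ^ r) k * Pr p (b * q) q (r * k) * Pr p (a * q ^ n) q (r * k)
      * Pr p (1 / (q ^ r) ^ n) (q ^ r) k"
proof -
  have 1: "(\<Prod>x\<leftarrow>map (\<lambda>i. b * q ^ i) [1..<r + 1]. efac x (q ^ r) p (int k)) = Pr p (b * q) q (r * k)"
  proof -
    have "(\<Prod>x\<leftarrow>map (\<lambda>i. b * q ^ i) [1..<r + 1]. efac x (q ^ r) p (int k))
        = (\<Prod>i<r. Pr p (b * q ^ Suc i) (q ^ r) k)"
      unfolding prod_list_upt_map efac_Pr by (rule prod_shift1)
    also have "\<dots> = (\<Prod>i<r. Pr p ((b * q) * q ^ i) (q ^ r) k)" by (simp add: mult_ac)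
    also have "\<dots> = Pr p (b * q) q (r * k)" by (rule Pr_base)
    finally show ?thesis .
  qed
  have 2: "(\<Prod>x\<leftarrow>map (\<lambda>i. a * q ^ (n + i)) [0..<r]. efac x (q ^ r) p (int k)) = Pr p (a * q ^ n) q (r * k)"
  proof -
    have "(\<Prod>x\<leftarrow>map (\<lambda>i. a * q ^ (n + i)) [0..<r]. efac x (q ^ r) p (int k))
        = (\<Prod>i<r. Pr p ((a * q ^ n) * q ^ i) (q ^ r) k)"
      unfolding prod_list_upt_map efac_Pr by (simp add: atLeast0LessThan power_add mult_ac)
    also have "\<dots> = Pr p (a * q ^ n) q (r * k)" by (rule Pr_base)
    finally show ?thesis .
  qed
  show ?thesis
    unfolding map_append prod_list.append list.map prod_list.Cons prod_list.Nil 1[unfolded efac_Pr] 2[unfolded efac_Pr] efac_Pr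
          powi_neg_rn[OF nz]
    by (simp only: mult_1_right mult.assoc)
qed

lemma params_den:
  fixes a b c q p :: complex and r n k :: nat
  assumes nz: "q \<noteq> 0" "a \<noteq> 0" "b \<noteq> 0" "c \<noteq> 0"
  shows "(\<Prod>x\<leftarrow>[c, a * b / c] @ map (\<lambda>i. b * q ^ i) [1..<r + 1]
                     @ map (\<lambda>i. a * q ^ (n + i)) [0..<r] @ [q powi (- int (r * n))]. efac (a * b * q ^ r / x) (q ^ r) p (int k))
    = Pr p (a * b * q ^ r / c) (q ^ r) k * Pr p (c * q ^ r) (q ^ r) k * Pr p a q (r * k)
      * Pr p (b * q / q ^ n) q (r * k) * Pr p (a * b * (q ^ r) ^ (n + 1)) (q ^ r) k"
proof -
  have 1: "(\<Prod>x\<leftarrow>map (\<lambda>i. b * q ^ i) [1..<r + 1]. efac (a * b * q ^ r / x) (q ^ r) p (int k)) = Pr p a q (r * k)"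
  proof -
    have "(\<Prod>x\<leftarrow>map (\<lambda>i. b * q ^ i) [1..<r + 1]. efac (a * b * q ^ r / x) (q ^ r) p (int k))
        = (\<Prod>i<r. Pr p (a * b * q ^ r / (b * q ^ Suc i)) (q ^ r) k)"
      unfolding prod_list_upt_map efac_Pr by (rule prod_shift1)
    also have "\<dots> = (\<Prod>i<r. Pr p (a * q ^ (r - Suc i)) (q ^ r) k)"
    proof (intro prod.cong refl)
      fix i assume "i \<in> {..<r}"
      hence "q ^ r = q ^ (r - Suc i) * q ^ Suc i" by (intro pow_split) auto
      thus "Pr p (a * b * q ^ r / (b * q ^ Suc i)) (q ^ r) k = Pr p (a * q ^ (r - Suc i)) (q ^ r) k"
        using nz by simp
    qed
    also have "\<dots> = (\<Prod>i<r. Pr p (a * q ^ i) (q ^ r) k)" by (rule prod.nat_diff_reindex)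
    also have "\<dots> = Pr p a q (r * k)" by (rule Pr_base)
    finally show ?thesis .
  qed
  have 2: "(\<Prod>x\<leftarrow>map (\<lambda>i. a * q ^ (n + i)) [0..<r]. efac (a * b * q ^ r / x) (q ^ r) p (int k))
      = Pr p (b * q / q ^ n) q (r * k)"
  proof -
    have "(\<Prod>x\<leftarrow>map (\<lambda>i. a * q ^ (n + i)) [0..<r]. efac (a * b * q ^ r / x) (q ^ r) p (int k))
        = (\<Prod>i<r. Pr p (a * b * q ^ r / (a * q ^ (n + i))) (q ^ r) k)"
      unfolding prod_list_upt_map efac_Pr by (simp add: atLeast0LessThan)
    also have "\<dots> = (\<Prod>i<r. Pr p ((b * q / q ^ n) * q ^ (r - Suc i)) (q ^ r) k)"
    proof (intro prod.cong refl)
      fix i assume "i \<in> {..<r}"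
      hence "q ^ r = q ^ (r - Suc i) * q ^ Suc i" by (intro pow_split) auto
      thus "Pr p (a * b * q ^ r / (a * q ^ (n + i))) (q ^ r) k = Pr p ((b * q / q ^ n) * q ^ (r - Suc i)) (q ^ r) k"
        using nz by (simp add: power_add field_simps)
    qed
    also have "\<dots> = (\<Prod>i<r. Pr p ((b * q / q ^ n) * q ^ i) (q ^ r) k)" by (rule prod.nat_diff_reindex)
    also have "\<dots> = Pr p (b * q / q ^ n) q (r * k)" by (rule Pr_base)
    finally show ?thesis .
  qed
  have 3: "a * b * q ^ r / (a * b / c) = c * q ^ r" using nz by simp
  have 4: "a * b * q ^ r / q powi (- int (r * n)) = a * b * (q ^ r) ^ (n + 1)"
    unfolding powi_neg_rn[OF nz(1)] using nz by (simp add: power_add mult_ac)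
  show ?thesis
    unfolding map_append prod_list.append list.map prod_list.Cons prod_list.Nil 1[unfolded efac_Pr] 2[unfolded efac_Pr] 3 4 efac_Pr
    by (simp only: mult_1_right mult.assoc)
qed

lemma core_algebra:
  fixes eA2 eA PAk Pc PAc Lb La N1 Qk PQk PAQc PcQ Mb Ma PAN PQn PAQn Pa Pb f DQ DA Qkn R :: complex
  assumes Qp: "N1 * Qk * DQ * Qkn = PQk * PQn"
    and Ap: "eA2 * PAk * DA = eA * PAQn * PAN"
    and ABp: "Lb * La * Pa * Pb = Qkn * f * Mb * Ma"
    and cR: "Pc * PAc = R * (PAQc * PcQ)"
    and nz: "eA \<noteq> 0" "PQk \<noteq> 0" "PAQc \<noteq> 0" "PcQ \<noteq> 0" "Mb \<noteq> 0" "Ma \<noteq> 0" "PAN \<noteq> 0"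
       "Pa \<noteq> 0" "Pb \<noteq> 0" "DQ \<noteq> 0" "DA \<noteq> 0" "Qkn \<noteq> 0"
  shows "eA2 / eA * (PAk * (Pc * PAc * Lb * La * N1) * Qk) / (PQk * (PAQc * PcQ * Mb * Ma * PAN))
       = (PQn * PAQn / (Pa * Pb)) * (f / (DQ * DA)) * R"
proof -
  have "eA2 / eA * (PAk * (Pc * PAc * Lb * La * N1) * Qk) / (PQk * (PAQc * PcQ * Mb * Ma * PAN))
      = (eA2 * PAk * DA) * (N1 * Qk * DQ * Qkn) * (Lb * La * Pa * Pb) * (Pc * PAc)
        / (eA * PQk * PAQc * PcQ * Mb * Ma * PAN * DA * DQ * Qkn * Pa * Pb)"
    using nz by (simp add: field_simps)
  also have "\<dots> = (eA * PAQn * PAN) * (PQk * PQn) * (Qkn * f * Mb * Ma) * (R * (PAQc * PcQ))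
        / (eA * PQk * PAQc * PcQ * Mb * Ma * PAN * DA * DQ * Qkn * Pa * Pb)"
    unfolding Ap Qp ABp cR ..
  also have "\<dots> = (PQn * PAQn / (Pa * Pb)) * (f / (DQ * DA)) * R"
    using nz by (simp add: field_simps)
  finally show ?thesis .
qed

lemma prod_list_nz:
  fixes xs :: "complex list" and f :: "complex \<Rightarrow> complex"
  assumes "\<And>x. x \<in> set xs \<Longrightarrow> f x \<noteq> 0"
  shows "(\<Prod>x\<leftarrow>xs. f x) \<noteq> 0"
  using assms by (induction xs) auto

lemma hole0_set: "{..n} - {0} = Suc ` {..<(n::nat)}"
proof (rule set_eqI)
  fix x show "x \<in> {..n} - {0} \<longleftrightarrow> x \<in> Suc ` {..<n}" by (cases x) auto
qed

lemma DQ_nz: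
  fixes Q :: complex
  assumes p: "norm p < 1" and Q: "Q \<noteq> 0" and hQ: "Pr p Q Q n \<noteq> 0"
    and jk: "j \<le> n" "k \<le> n" "j \<noteq> k"
  shows "ellE (Q ^ j / Q ^ k) p \<noteq> 0"
proof (cases "k < j")
  case True
  have "Q ^ j = Q ^ k * (Q * Q ^ (j - k - 1))" using True by (simp flip: power_add power_Suc)
  hence e: "Q ^ j / Q ^ k = Q * Q ^ (j - k - 1)" using Q by simp
  have "j - k - 1 < n" using True jk by simp
  thus ?thesis unfolding e using hQ by (simp add: Pr_nz_iff)
next
  case False
  hence lt: "j < k" using jk by simp
  have "Q ^ k = Q ^ j * (Q * Q ^ (k - j - 1))" using lt by (simp flip: power_add power_Suc)
  hence e: "Q ^ j / Q ^ k = 1 / (Q * Q ^ (k - j - 1))" using Q by simp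
  have "k - j - 1 < n" using lt jk by simp
  hence "ellE (Q * Q ^ (k - j - 1)) p \<noteq> 0" using hQ by (simp add: Pr_nz_iff)
  moreover have "ellE (1 / (Q * Q ^ (k - j - 1))) p = - ellE (Q * Q ^ (k - j - 1)) p / (Q * Q ^ (k - j - 1))"
    by (rule ellE_inv[OF p]) (use Q in simp)
  ultimately show ?thesis unfolding e using Q by simp
qed

lemma DA_nz:
  fixes Q A :: complex
  assumes hG: "Pr p (A * Q) Q n \<noteq> 0" and hN: "Pr p (A * Q ^ (n + 1)) Q n \<noteq> 0"
    and jk: "j \<le> n" "k \<le> n" "j \<noteq> k"
  shows "ellE (A * Q ^ (j + k)) p \<noteq> 0"
proof (cases "j + k \<le> n")
  case True
  have "j + k \<ge> 1" using jk by simp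
  hence "j + k = Suc (j + k - 1)" by simp
  hence "Q ^ (j + k) = Q ^ Suc (j + k - 1)" by (rule arg_cong)
  hence e: "A * Q ^ (j + k) = A * Q * Q ^ (j + k - 1)" by (simp add: mult.assoc)
  have "j + k - 1 < n" using True \<open>j + k \<ge> 1\<close> by simp
  thus ?thesis unfolding e using hG by (simp add: Pr_nz_iff)
next
  case False
  have "j + k = (n + 1) + (j + k - (n + 1))" using False by simp
  hence "Q ^ (j + k) = Q ^ ((n + 1) + (j + k - (n + 1)))" by (rule arg_cong)
  hence e: "A * Q ^ (j + k) = A * Q ^ (n + 1) * Q ^ (j + k - (n + 1))"
    by (simp only: power_add mult.assoc)
  have "j + k - (n + 1) < n" using False jk by simp
  thus ?thesis unfolding e using hN by (simp add: Pr_nz_iff)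
qed

theorem main_generic:
  fixes a b c q p :: complex and r n :: nat
  defines "params \<equiv> [c, a * b / c] @ map (\<lambda>i. b * q ^ i) [1..<r + 1]
                     @ map (\<lambda>i. a * q ^ (n + i)) [0..<r] @ [q powi (- int (r * n))]"
  assumes p: "norm p < 1" and nz: "q \<noteq> 0" "a \<noteq> 0" "b \<noteq> 0" "c \<noteq> 0"
    and hA: "ellE (a * b) p \<noteq> 0"
    and hQ: "Pr p (q ^ r) (q ^ r) n \<noteq> 0"
    and hpar: "\<And>x. x \<in> set params \<Longrightarrow> Pr p (a * b * q ^ r / x) (q ^ r) n \<noteq> 0"
    and ha: "Pr p a q n \<noteq> 0" and hb: "Pr p (1 / b) q n \<noteq> 0"
    and hG: "Pr p (a * b * q ^ r) (q ^ r) n \<noteq> 0"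
  shows "omega (a * b) params (q ^ r) p =
     Pr p (a / c) q n * Pr p (c / b) q n * Pr p (q ^ r) (q ^ r) n * Pr p (a * b * q ^ r) (q ^ r) n
     / (Pr p (c * q ^ r) (q ^ r) n * Pr p (a * b * q ^ r / c) (q ^ r) n * Pr p a q n * Pr p (1 / b) q n)"
proof -
  define Q where "Q = q ^ r"
  define A where "A = a * b"
  have Q0: "Q \<noteq> 0" using nz by (simp add: Q_def)
  have A0: "A \<noteq> 0" using nz by (simp add: A_def)
  have hpar': "Pr p (A * Q / x) Q n \<noteq> 0" if "x \<in> set params" for x
    using hpar[OF that] by (simp add: A_def Q_def)
  have hc1: "Pr p (A * Q / c) Q n \<noteq> 0" by (rule hpar') (simp add: params_def)
  have hc2: "Pr p (c * Q) Q n \<noteq> 0"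
  proof -
    have "Pr p (A * Q / (a * b / c)) Q n \<noteq> 0" by (rule hpar') (simp add: params_def)
    moreover have "A * Q / (a * b / c) = c * Q" using nz by (simp add: A_def)
    ultimately show ?thesis by simp
  qed
  have hN: "Pr p (A * Q ^ (n + 1)) Q n \<noteq> 0"
  proof -
    have "Pr p (A * Q / q powi (- int (r * n))) Q n \<noteq> 0" by (rule hpar') (simp add: params_def)
    moreover have "A * Q / q powi (- int (r * n)) = A * Q ^ (n + 1)"
      unfolding powi_neg_rn[OF nz(1)] Q_def by (simp add: power_add)
    ultimately show ?thesis by simp
  qed
  have hG': "Pr p (A * Q) Q n \<noteq> 0" using hG by (simp add: A_def Q_def)
  have hQ': "Pr p Q Q n \<noteq> 0" using hQ by (simp add: Q_def)
  define trm where "trm = (\<lambda>k::nat. ellE (A * Q ^ (2 * k)) p / ellE A p *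
        (efac A Q p (int k) * (\<Prod>x\<leftarrow>params. efac x Q p (int k)) * Q ^ k) /
        (efac Q Q p (int k) * (\<Prod>x\<leftarrow>params. efac (A * Q / x) Q p (int k))))"
  have om: "omega (a * b) params (q ^ r) p = suminf trm"
    unfolding omega_def trm_def A_def Q_def by (rule refl)
  have PN: "(\<Prod>x\<leftarrow>params. efac x Q p (int k))
    = Pr p c Q k * Pr p (A / c) Q k * Pr p (b * q) q (r * k) * Pr p (a * q ^ n) q (r * k)
      * Pr p (1 / Q ^ n) Q k" for k
    unfolding params_def Q_def A_def by (rule params_num[OF nz(1)])
  have PD: "(\<Prod>x\<leftarrow>params. efac (A * Q / x) Q p (int k))
    = Pr p (A * Q / c) Q k * Pr p (c * Q) Q k * Pr p a q (r * k)
      * Pr p (b * q / q ^ n) q (r * k) * Pr p (A * Q ^ (n + 1)) Q k" for k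
    unfolding params_def Q_def A_def by (rule params_den[OF nz])
  have vanish: "trm k = 0" if "k \<notin> {..n}" for k
  proof -
    have "n < k" using that by simp
    moreover have "ellE (1 / Q ^ n * Q ^ n) p = 0" using Q0 ellE_one[OF p] by simp
    ultimately have "Pr p (1 / Q ^ n) Q k = 0" unfolding Pr_def
      by (subst prod_zero_iff) (auto intro!: bexI[of _ n] simp del: divide_self_if)
    thus ?thesis unfolding trm_def PN by simp
  qed
  have sum_eq: "suminf trm = (\<Sum>k\<le>n. trm k)"
    by (rule suminf_finite) (use vanish in auto)
  define g where "g = (\<lambda>j. phi p A (Q ^ j) c)"
  define f where "f = (\<lambda>w. \<Prod>i<n. phi p A (q ^ i / b) w)"
  define Ck where "Ck = (\<lambda>k. f (1 / Q ^ k) / (\<Prod>j\<in>{..n} - {k}. phi p A (Q ^ j) (1 / Q ^ k)))"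
  have phik: "phi p A (Q ^ j) (1 / Q ^ k) = ellE (Q ^ j / Q ^ k) p * ellE (A * Q ^ (j + k)) p" for j k
    unfolding phi_def using Q0 by (simp add: power_add mult.assoc)
  have dist: "phi p A (Q ^ j) (1 / Q ^ k) \<noteq> 0" if "j \<le> n" "k \<le> n" "j \<noteq> k" for j k
    unfolding phik using DQ_nz[OF p Q0 hQ' that] DA_nz[OF hG' hN that] by simp
  have interp_inst: "f c = (\<Sum>k\<le>n. Ck k * (\<Prod>j\<in>{..n} - {k}. g j))"
    unfolding f_def Ck_def g_def
    by (rule interp[where t = "\<lambda>j. Q ^ j" and a = "\<lambda>i. q ^ i / b", OF p A0]) (use Q0 nz dist in auto)
  have Pi0: "(\<Prod>j\<in>{..n} - {0}. g j) = Pr p (c * Q) Q n * Pr p (A * Q / c) Q n"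
  proof -
    have "(\<Prod>j\<in>{..n} - {0}. g j) = (\<Prod>i<n. g (Suc i))"
      unfolding hole0_set by (simp add: prod.reindex)
    also have "\<dots> = (\<Prod>i<n. ellE (c * Q * Q ^ i) p * ellE (A * Q / c * Q ^ i) p)"
      unfolding g_def phi_def by (intro prod.cong refl) (simp add: mult_ac)
    also have "\<dots> = Pr p (c * Q) Q n * Pr p (A * Q / c) Q n"
      unfolding Pr_def by (rule prod.distrib)
    finally show ?thesis .
  qed
  have Pi0nz: "(\<Prod>j\<in>{..n} - {0}. g j) \<noteq> 0" unfolding Pi0 using hc1 hc2 by simp
  have fc: "f c = Pr p (c / b) q n * Pr p (a / c) q n"
  proof -
    have "f c = (\<Prod>i<n. ellE (c / b * q ^ i) p * ellE (a / c * q ^ i) p)"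
      unfolding f_def phi_def A_def using nz by (intro prod.cong refl) (simp add: field_simps)
    also have "\<dots> = Pr p (c / b) q n * Pr p (a / c) q n" unfolding Pr_def by (rule prod.distrib)
    finally show ?thesis .
  qed
  define K0 where "K0 = Pr p Q Q n * Pr p (A * Q) Q n / (Pr p a q n * Pr p (1 / b) q n)"
  have termk: "trm k = K0 * Ck k * ((\<Prod>j\<in>{..n} - {k}. g j) / (\<Prod>j\<in>{..n} - {0}. g j))"
    if k: "k \<le> n" for k
  proof -
    define R where "R = (\<Prod>j\<in>{..n} - {k}. g j) / (\<Prod>j\<in>{..n} - {0}. g j)"
    have trm_exp: "trm k = ellE (A * Q ^ (2 * k)) p / ellE A p *
        (Pr p A Q k * (Pr p c Q k * Pr p (A / c) Q k * Pr p (b * q) q (r * k) * Pr p (a * q ^ n) q (r * k)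
          * Pr p (1 / Q ^ n) Q k) * Q ^ k) /
        (Pr p Q Q k * (Pr p (A * Q / c) Q k * Pr p (c * Q) Q k * Pr p a q (r * k)
          * Pr p (b * q / q ^ n) q (r * k) * Pr p (A * Q ^ (n + 1)) Q k))"
      unfolding trm_def PN PD unfolding efac_Pr by (rule refl)
    have Dsplit: "(\<Prod>j\<in>{..n} - {k}. phi p A (Q ^ j) (1 / Q ^ k))
        = (\<Prod>j\<in>{..n} - {k}. ellE (Q ^ j / Q ^ k) p) * (\<Prod>j\<in>{..n} - {k}. ellE (A * Q ^ (j + k)) p)"
      unfolding phik by (rule prod.distrib)
    have Qp: "Pr p (1 / Q ^ n) Q k * Q ^ k * (\<Prod>j\<in>{..n} - {k}. ellE (Q ^ j / Q ^ k) p) * Q ^ (k * n)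
         = Pr p Q Q k * Pr p Q Q n" by (rule Qpart[OF p Q0 k])
    have Ap: "ellE (A * Q ^ (2 * k)) p * Pr p A Q k * (\<Prod>j\<in>{..n} - {k}. ellE (A * Q ^ (j + k)) p)
       = ellE A p * Pr p (A * Q) Q n * Pr p (A * Q ^ (n + 1)) Q k" by (rule Apart[OF k])
    have ABp: "Pr p (b * q) q (r * k) * Pr p (a * q ^ n) q (r * k) * Pr p a q n * Pr p (1 / b) q n
       = Q ^ (k * n) * f (1 / Q ^ k) * Pr p a q (r * k) * Pr p (b * q / q ^ n) q (r * k)"
      using ABpart[OF p nz(2,3,1), where r = r and n = n and k = k] unfolding f_def A_def Q_def .
    have PDnz: "(\<Prod>x\<leftarrow>params. efac (A * Q / x) Q p (int k)) \<noteq> 0"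
    proof (rule prod_list_nz)
      fix x assume "x \<in> set params"
      thus "efac (A * Q / x) Q p (int k) \<noteq> 0" unfolding efac_Pr using Pr_nz_mono[OF hpar' k] by blast
    qed
    hence PDnz': "Pr p a q (r * k) \<noteq> 0" "Pr p (b * q / q ^ n) q (r * k) \<noteq> 0"
        "Pr p (A * Q ^ (n + 1)) Q k \<noteq> 0"
      unfolding PD by auto
    have gk_eq: "g k * (\<Prod>j\<in>{..n} - {k}. g j) = g 0 * (\<Prod>j\<in>{..n} - {0}. g j)"
      using prod_hole_mult[OF k, of g] prod_hole_mult[of 0 n g] by simp
    have cR: "Pr p c Q k * Pr p (A / c) Q k = R * (Pr p (A * Q / c) Q k * Pr p (c * Q) Q k)"
    proof (cases "k = 0")
      case True
      thus ?thesis unfolding R_def using Pi0nz by simp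
    next
      case False
      have k1: "k - 1 < n" "k = Suc (k - 1)" using False k by auto
      have e1: "c * Q ^ k = c * Q * Q ^ (k - 1)" using k1(2) by (metis mult.assoc power_Suc)
      have e2: "A * Q ^ k / c = A * Q / c * Q ^ (k - 1)" using k1(2) by (metis power_Suc times_divide_eq_left mult.commute mult.left_commute)
      have gk: "g k = ellE (c * Q ^ k) p * ellE (A * Q ^ k / c) p" unfolding g_def phi_def by simp
      have g0: "g 0 = ellE c p * ellE (A / c) p" unfolding g_def phi_def by simp
      have gknz: "g k \<noteq> 0" unfolding gk e1 e2 using hc1 hc2 k1(1) by (simp add: Pr_nz_iff)
      have c1: "Pr p c Q k * ellE (c * Q ^ k) p = ellE c p * Pr p (c * Q) Q k"
        using Pr_Suc[of p c Q k] Pr_Suc'[of p c Q k] by simp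
      have c2: "Pr p (A / c) Q k * ellE (A * Q ^ k / c) p = ellE (A / c) p * Pr p (A * Q / c) Q k"
        using Pr_Suc[of p "A / c" Q k] Pr_Suc'[of p "A / c" Q k] by simp
      have R: "R = g 0 / g k" unfolding R_def using gk_eq gknz Pi0nz by (simp add: field_simps)
      show ?thesis unfolding R g0 using c1 c2 gknz unfolding gk by (simp add: field_simps)
    qed
    have DQnz: "(\<Prod>j\<in>{..n} - {k}. ellE (Q ^ j / Q ^ k) p) \<noteq> 0"
      using DQ_nz[OF p Q0 hQ' _ k] by (subst prod_zero_iff) auto
    have DAnz: "(\<Prod>j\<in>{..n} - {k}. ellE (A * Q ^ (j + k)) p) \<noteq> 0"
      using DA_nz[OF hG' hN _ k] by (subst prod_zero_iff) auto
    have "trm k = (Pr p Q Q n * Pr p (A * Q) Q n / (Pr p a q n * Pr p (1 / b) q n))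
        * (f (1 / Q ^ k) / ((\<Prod>j\<in>{..n} - {k}. ellE (Q ^ j / Q ^ k) p) * (\<Prod>j\<in>{..n} - {k}. ellE (A * Q ^ (j + k)) p))) * R"
      unfolding trm_exp
      by (rule core_algebra[OF Qp Ap ABp cR hA[folded A_def] Pr_nz_mono[OF hQ' k] Pr_nz_mono[OF hc1 k]
            Pr_nz_mono[OF hc2 k] PDnz' ha hb DQnz DAnz]) (use Q0 in simp)
    thus ?thesis unfolding K0_def Ck_def Dsplit R_def .
  qed
  have "omega (a * b) params (q ^ r) p = (\<Sum>k\<le>n. K0 * Ck k * ((\<Prod>j\<in>{..n} - {k}. g j) / (\<Prod>j\<in>{..n} - {0}. g j)))"
    unfolding om sum_eq using termk by simp
  also have "\<dots> = K0 / (\<Prod>j\<in>{..n} - {0}. g j) * (\<Sum>k\<le>n. Ck k * (\<Prod>j\<in>{..n} - {k}. g j))"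
    by (simp add: sum_distrib_left mult_ac)
  also have "\<dots> = K0 * f c / (\<Prod>j\<in>{..n} - {0}. g j)" unfolding interp_inst[symmetric] by simp
  also have "\<dots> = Pr p (a / c) q n * Pr p (c / b) q n * Pr p (q ^ r) (q ^ r) n * Pr p (a * b * q ^ r) (q ^ r) n
     / (Pr p (c * q ^ r) (q ^ r) n * Pr p (a * b * q ^ r / c) (q ^ r) n * Pr p a q n * Pr p (1 / b) q n)"
    unfolding K0_def fc Pi0 A_def Q_def by (simp add: mult_ac)
  finally show ?thesis .
qed

lemma ellE_m1:
  assumes p: "norm p < 1"
  shows "ellE (-1) p \<noteq> 0"
proof
  assume "ellE (-1) p = 0"
  with ellE_eq_0_iff[OF p, of "-1"] consider k where "- (p ^ k) = 1" | k where "-1 = p ^ Suc k" by auto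
  then show False
  proof cases
    case 1
    hence pk: "p ^ k = -1" by (simp add: minus_equation_iff)
    show False
    proof (cases k)
      case 0 thus False using pk by simp
    next
      case (Suc k')
      have "norm (p ^ k) = 1" using pk by simp
      moreover have "norm p ^ Suc k' \<le> norm p" using p by (intro power_Suc_le_self) auto
      ultimately show False using p Suc by (simp add: norm_power del: power_Suc)
    qed
  next
    case 2
    hence "p ^ Suc k = -1" by simp
    hence "norm (p ^ Suc k) = 1" by (simp del: power_Suc)
    moreover have "norm p ^ Suc k \<le> norm p" using p by (intro power_Suc_le_self) auto
    ultimately show False using p by (simp add: norm_power del: power_Suc)
  qed
qed

lemma isCont_ellE:
  assumes p: "norm p < 1" and f: "isCont f a" and fa: "f a \<noteq> 0"
  shows "isCont (\<lambda>z. ellE (f z) p) a"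
proof -
  have "(\<lambda>x. ellE x p) analytic_on (- {0})"
    using ellE_comp_analytic[OF p, of "\<lambda>x. x" "- {0}"] by auto
  hence "(\<lambda>x. ellE x p) analytic_on {f a}" by (rule analytic_on_subset) (use fa in auto)
  hence "isCont (\<lambda>x. ellE x p) (f a)" by (rule analytic_at_imp_isCont)
  thus ?thesis using isCont_o2[OF f] by blast
qed

lemma isCont_Pr:
  assumes p: "norm p < 1" and f: "isCont f a" and fa: "f a \<noteq> 0" and B: "B \<noteq> 0"
  shows "isCont (\<lambda>z. Pr p (f z) B m) a"
  unfolding Pr_def
  by (intro continuous_intros isCont_ellE[OF p]) (use f fa B in \<open>auto intro!: continuous_intros\<close>)

lemma ev_Pr_cont:
  assumes p: "norm p < 1" and f: "isCont f a" and fa: "f a \<noteq> 0" and B: "B \<noteq> 0"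
    and nz: "Pr p (f a) B m \<noteq> 0"
  shows "eventually (\<lambda>z. Pr p (f z) B m \<noteq> 0) (at a)"
proof -
  have "(\<lambda>z. Pr p (f z) B m) \<midarrow>a\<rightarrow> Pr p (f a) B m"
    using isCont_Pr[OF p f fa B] by (simp add: isCont_def)
  thus ?thesis using nz by (rule tendsto_imp_eventually_ne)
qed

lemma ev_ellE_cont:
  assumes p: "norm p < 1" and f: "isCont f a" and fa: "f a \<noteq> 0" and nz: "ellE (f a) p \<noteq> 0"
  shows "eventually (\<lambda>z. ellE (f z) p \<noteq> 0) (at a)"
proof -
  have "(\<lambda>z. ellE (f z) p) \<midarrow>a\<rightarrow> ellE (f a) p"
    using isCont_ellE[OF p f fa] by (simp add: isCont_def)
  thus ?thesis using nz by (rule tendsto_imp_eventually_ne)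
qed

lemma ev_Pr_iso:
  assumes p: "norm p < 1" and w: "w \<noteq> 0" and B: "B \<noteq> 0" and a: "a \<noteq> 0"
  shows "eventually (\<lambda>z. Pr p (z * w) B m \<noteq> 0) (at a)"
proof -
  have "eventually (\<lambda>z. ellE (z * (w * B ^ i)) p \<noteq> 0) (at a)" for i
  proof (rule ev_nonzero)
    show "(\<lambda>z. ellE (z * (w * B ^ i)) p) holomorphic_on - {0}"
      by (rule analytic_imp_holomorphic, rule ellE_comp_analytic[OF p]) (use w B in \<open>auto intro!: analytic_intros\<close>)
    show "- 1 / (w * B ^ i) \<noteq> 0" using w B by simp
    show "ellE (- 1 / (w * B ^ i) * (w * B ^ i)) p \<noteq> 0" using w B ellE_m1[OF p] by simp
  qed (rule a)
  hence "eventually (\<lambda>z. \<forall>i\<in>{..<m}. ellE (z * (w * B ^ i)) p \<noteq> 0) (at a)"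
    by (intro eventually_ball_finite) auto
  thus ?thesis by eventually_elim (auto simp: Pr_nz_iff mult.assoc)
qed

definition Tm :: "complex \<Rightarrow> complex \<Rightarrow> complex \<Rightarrow> complex \<Rightarrow> complex \<Rightarrow> nat \<Rightarrow> nat \<Rightarrow> nat \<Rightarrow> complex" where
  "Tm a b c q p r n k = ellE (a * b * (q ^ r) ^ (2 * k)) p / ellE (a * b) p *
        (Pr p (a * b) (q ^ r) k * (Pr p c (q ^ r) k * Pr p (a * b / c) (q ^ r) k * Pr p (b * q) q (r * k)
          * Pr p (a * q ^ n) q (r * k) * Pr p (1 / (q ^ r) ^ n) (q ^ r) k) * (q ^ r) ^ k) /
        (Pr p (q ^ r) (q ^ r) k * (Pr p (a * b * q ^ r / c) (q ^ r) k * Pr p (c * q ^ r) (q ^ r) k * Pr p a q (r * k)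
          * Pr p (b * q / q ^ n) q (r * k) * Pr p (a * b * (q ^ r) ^ (n + 1)) (q ^ r) k))"

lemma omega_finite:
  fixes a b c q p :: complex and r n :: nat
  assumes p: "norm p < 1" and nz: "q \<noteq> 0" "a \<noteq> 0" "b \<noteq> 0" "c \<noteq> 0"
  shows "omega (a * b) ([c, a * b / c] @ map (\<lambda>i. b * q ^ i) [1..<r + 1]
                     @ map (\<lambda>i. a * q ^ (n + i)) [0..<r] @ [q powi (- int (r * n))]) (q ^ r) p
       = (\<Sum>k\<le>n. Tm a b c q p r n k)"
proof -
  define params where "params = [c, a * b / c] @ map (\<lambda>i. b * q ^ i) [1..<r + 1]
                     @ map (\<lambda>i. a * q ^ (n + i)) [0..<r] @ [q powi (- int (r * n))]"
  define Q where "Q = q ^ r"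
  define A where "A = a * b"
  have Q0: "Q \<noteq> 0" using nz by (simp add: Q_def)
  define trm where "trm = (\<lambda>k::nat. ellE (A * Q ^ (2 * k)) p / ellE A p *
        (efac A Q p (int k) * (\<Prod>x\<leftarrow>params. efac x Q p (int k)) * Q ^ k) /
        (efac Q Q p (int k) * (\<Prod>x\<leftarrow>params. efac (A * Q / x) Q p (int k))))"
  have om: "omega (a * b) params (q ^ r) p = suminf trm"
    unfolding omega_def trm_def A_def Q_def by (rule refl)
  have PN: "(\<Prod>x\<leftarrow>params. efac x Q p (int k))
    = Pr p c Q k * Pr p (A / c) Q k * Pr p (b * q) q (r * k) * Pr p (a * q ^ n) q (r * k)
      * Pr p (1 / Q ^ n) Q k" for k
    unfolding params_def Q_def A_def by (rule params_num[OF nz(1)])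
  have PD: "(\<Prod>x\<leftarrow>params. efac (A * Q / x) Q p (int k))
    = Pr p (A * Q / c) Q k * Pr p (c * Q) Q k * Pr p a q (r * k)
      * Pr p (b * q / q ^ n) q (r * k) * Pr p (A * Q ^ (n + 1)) Q k" for k
    unfolding params_def Q_def A_def by (rule params_den[OF nz])
  have vanish: "trm k = 0" if "k \<notin> {..n}" for k
  proof -
    have "n < k" using that by simp
    moreover have "ellE (1 / Q ^ n * Q ^ n) p = 0" using Q0 ellE_one[OF p] by simp
    ultimately have "Pr p (1 / Q ^ n) Q k = 0" unfolding Pr_def
      by (subst prod_zero_iff) (auto intro!: bexI[of _ n] simp del: divide_self_if)
    thus ?thesis unfolding trm_def PN by simp
  qed
  have sum_eq: "suminf trm = (\<Sum>k\<le>n. trm k)"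
    by (rule suminf_finite) (use vanish in auto)
  have "trm k = Tm a b c q p r n k" for k
    unfolding trm_def PN PD unfolding efac_Pr Tm_def A_def Q_def by (rule refl)
  thus ?thesis using om sum_eq unfolding params_def by simp
qed

theorem theorem4p1:
  fixes a b c q p :: complex and r n :: nat
  defines "params \<equiv> [c, a * b / c] @ map (\<lambda>i. b * q ^ i) [1..<r + 1]
                     @ map (\<lambda>i. a * q ^ (n + i)) [0..<r] @ [q powi (- int (r * n))]"
  assumes "r \<ge> 1"
    and "norm p < 1" and "q \<noteq> 0" and "a \<noteq> 0" and "b \<noteq> 0" and "c \<noteq> 0"
    and "ellE (a * b) p \<noteq> 0"
    and "\<And>k. efac (q ^ r) (q ^ r) p (int k) \<noteq> 0"
    and "\<And>k x. x \<in> set params \<Longrightarrow> efac (a * b * q ^ r / x) (q ^ r) p (int k) \<noteq> 0"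
    and "efac (c * q ^ r) (q ^ r) p (int n) \<noteq> 0"
    and "efac (a * b * q ^ r / c) (q ^ r) p (int n) \<noteq> 0"
    and "efac a q p (int n) \<noteq> 0"
    and "efac (1 / b) q p (int n) \<noteq> 0"
  shows "omega (a * b) params (q ^ r) p =
     efac (a / c) q p (int n) * efac (c / b) q p (int n)
       * efac (q ^ r) (q ^ r) p (int n) * efac (a * b * q ^ r) (q ^ r) p (int n)
     / (efac (c * q ^ r) (q ^ r) p (int n) * efac (a * b * q ^ r / c) (q ^ r) p (int n)
        * efac a q p (int n) * efac (1 / b) q p (int n))"
proof -
  have p: "norm p < 1" using assms by blast
  have nz: "q \<noteq> 0" "a \<noteq> 0" "b \<noteq> 0" "c \<noteq> 0" using assms by blast+
  have hA: "ellE (a * b) p \<noteq> 0" using assms by blast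
  have Q0: "q ^ r \<noteq> 0" using nz by simp
  have "efac (q ^ r) (q ^ r) p (int n) \<noteq> 0" using assms by blast
  hence hQn: "Pr p (q ^ r) (q ^ r) n \<noteq> 0" by (simp add: efac_Pr)
  have hpar: "Pr p (a * b * q ^ r / x) (q ^ r) n \<noteq> 0" if "x \<in> set params" for x
  proof -
    have "efac (a * b * q ^ r / x) (q ^ r) p (int n) \<noteq> 0" using that assms by blast
    thus ?thesis by (simp add: efac_Pr)
  qed
  have hb: "Pr p (1 / b) q n \<noteq> 0" using assms by (simp add: efac_Pr)
  have ha: "Pr p a q n \<noteq> 0" using assms by (simp add: efac_Pr)
  have hc1: "Pr p (a * b * q ^ r / c) (q ^ r) n \<noteq> 0" using assms by (simp add: efac_Pr)
  have hc2: "Pr p (c * q ^ r) (q ^ r) n \<noteq> 0" using assms by (simp add: efac_Pr)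
  have PDa: "Pr p (a * b * q ^ r / c) (q ^ r) n * Pr p (c * q ^ r) (q ^ r) n * Pr p a q (r * n)
      * Pr p (b * q / q ^ n) q (r * n) * Pr p (a * b * (q ^ r) ^ (n + 1)) (q ^ r) n \<noteq> 0"
  proof -
    have "(\<Prod>x\<leftarrow>params. efac (a * b * q ^ r / x) (q ^ r) p (int n)) \<noteq> 0"
      by (rule prod_list_nz) (use hpar in \<open>simp add: efac_Pr\<close>)
    thus ?thesis unfolding params_def params_den[OF nz] .
  qed
  hence hMa: "Pr p a q (r * n) \<noteq> 0" and hMb: "Pr p (b * q / q ^ n) q (r * n) \<noteq> 0"
    and hN: "Pr p (a * b * (q ^ r) ^ (n + 1)) (q ^ r) n \<noteq> 0" by auto
  define L where "L = (\<lambda>z. \<Sum>k\<le>n. Tm z b c q p r n k)"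
  define R where "R = (\<lambda>z. Pr p (z / c) q n * Pr p (c / b) q n * Pr p (q ^ r) (q ^ r) n * Pr p (z * b * q ^ r) (q ^ r) n
     / (Pr p (c * q ^ r) (q ^ r) n * Pr p (z * b * q ^ r / c) (q ^ r) n * Pr p z q n * Pr p (1 / b) q n))"
  have lhs: "omega (a * b) params (q ^ r) p = L a"
    unfolding params_def L_def by (rule omega_finite[OF p nz])
  have rhs: "efac (a / c) q p (int n) * efac (c / b) q p (int n)
       * efac (q ^ r) (q ^ r) p (int n) * efac (a * b * q ^ r) (q ^ r) p (int n)
     / (efac (c * q ^ r) (q ^ r) p (int n) * efac (a * b * q ^ r / c) (q ^ r) p (int n)
        * efac a q p (int n) * efac (1 / b) q p (int n)) = R a"
    unfolding R_def efac_Pr ..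
  have ev: "eventually (\<lambda>z. L z = R z) (at a)"
  proof -
    have e0: "eventually (\<lambda>z. z \<noteq> 0) (at a)" using nz(2) by (intro eventually_neq_at_within)
    have e1: "eventually (\<lambda>z. ellE (z * b) p \<noteq> 0) (at a)"
      by (rule ev_ellE_cont[OF p]) (use nz hA in \<open>auto intro!: continuous_intros\<close>)
    have e2: "eventually (\<lambda>z. Pr p (z * b * q ^ r / c) (q ^ r) n \<noteq> 0) (at a)"
      by (rule ev_Pr_cont[OF p]) (use nz hc1 in \<open>auto intro!: continuous_intros\<close>)
    have e3: "eventually (\<lambda>z. Pr p z q (r * n) \<noteq> 0) (at a)"
      by (rule ev_Pr_cont[OF p, where f = "\<lambda>z. z"]) (use nz hMa in \<open>auto intro!: continuous_intros\<close>)
    have e4: "eventually (\<lambda>z. Pr p (z * b * (q ^ r) ^ (n + 1)) (q ^ r) n \<noteq> 0) (at a)"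
      by (rule ev_Pr_cont[OF p]) (use nz hN in \<open>auto intro!: continuous_intros\<close>)
    have e5: "eventually (\<lambda>z. Pr p z q n \<noteq> 0) (at a)"
      by (rule ev_Pr_cont[OF p, where f = "\<lambda>z. z"]) (use nz ha in \<open>auto intro!: continuous_intros\<close>)
    have e6: "eventually (\<lambda>z. Pr p (z * b * q ^ r) (q ^ r) n \<noteq> 0) (at a)"
      using ev_Pr_iso[OF p _ Q0 nz(2), of "b * q ^ r" n] nz by (simp add: mult.assoc)
    show ?thesis using e0 e1 e2 e3 e4 e5 e6
    proof eventually_elim
      case (elim z)
      define pz where "pz = [c, z * b / c] @ map (\<lambda>i. b * q ^ i) [1..<r + 1]
                     @ map (\<lambda>i. z * q ^ (n + i)) [0..<r] @ [q powi (- int (r * n))]"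
      have nzz: "q \<noteq> 0" "z \<noteq> 0" "b \<noteq> 0" "c \<noteq> 0" using nz elim by auto
      have prodz: "(\<Prod>x\<leftarrow>pz. efac (z * b * q ^ r / x) (q ^ r) p (int n)) \<noteq> 0"
        unfolding pz_def params_den[OF nzz] using elim hc2 hMb by simp
      have hparz: "Pr p (z * b * q ^ r / x) (q ^ r) n \<noteq> 0" if "x \<in> set pz" for x
      proof
        assume "Pr p (z * b * q ^ r / x) (q ^ r) n = 0"
        hence "0 \<in> set (map (\<lambda>x. efac (z * b * q ^ r / x) (q ^ r) p (int n)) pz)"
          using that by (force simp: efac_Pr)
        thus False using prodz prod_list_zero_iff by metis
      qed
      have "omega (z * b) pz (q ^ r) p = R z"
        unfolding R_def pz_def
        by (rule main_generic[OF p nzz(1,2,3,4) elim(2) hQn _ elim(6) hb elim(7)])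
           (use hparz in \<open>simp add: pz_def\<close>)
      moreover have "omega (z * b) pz (q ^ r) p = L z"
        unfolding pz_def L_def by (rule omega_finite[OF p nzz])
      ultimately show ?case by simp
    qed
  qed
  have contL: "isCont L a"
  proof -
    have dnz: "Pr p (q ^ r) (q ^ r) k * (Pr p (a * b * q ^ r / c) (q ^ r) k * Pr p (c * q ^ r) (q ^ r) k
        * Pr p a q (r * k) * Pr p (b * q / q ^ n) q (r * k) * Pr p (a * b * (q ^ r) ^ (n + 1)) (q ^ r) k) \<noteq> 0"
      if "k \<le> n" for k
      using Pr_nz_mono[OF hQn that] Pr_nz_mono[OF hc1 that] Pr_nz_mono[OF hc2 that]
        Pr_nz_mono[OF hMa] Pr_nz_mono[OF hMb] Pr_nz_mono[OF hN that] that by simp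
    show ?thesis unfolding L_def Tm_def
      by (intro continuous_intros isCont_ellE[OF p] isCont_Pr[OF p])
         (use nz hA dnz Q0 in \<open>auto intro!: continuous_intros\<close>)
  qed
  have contR: "isCont R a"
    unfolding R_def
    by (intro continuous_intros isCont_ellE[OF p] isCont_Pr[OF p])
       (use nz hA hc1 hc2 ha hb Q0 in \<open>auto intro!: continuous_intros\<close>)
  have ev': "eventually (\<lambda>z. R z = L z) (at a)" using ev by (auto elim: eventually_mono)
  have "L \<midarrow>a\<rightarrow> R a"
    by (rule Lim_transform_eventually[OF isContD[OF contR] ev'])
  hence "L a = R a" using isContD[OF contL] tendsto_unique[OF at_neq_bot] by metis
  thus ?thesis unfolding lhs rhs .
qed

end
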